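(* Let $A\in(a,b)$, $x_A,x_b\in\mathbb{R}$, $U_A=\{x\in C^1[a,b]: x(A)=x_A,\ x(b)=x_b\}$, and $J(x)=\int_A^b L(t,x(t),{}^CD_{a+}^{\alpha,\rho}x(t))\,dt$. If $x$ is a local minimizer of $J$ on $U_A$, then, writing $\Lambda(t)=\partial_3L(t,x(t),{}^CD_{a+}^{\alpha,\rho}x(t))$, $$D_{A-}^{\alpha,\rho}\Lambda(t)-D_{b-}^{\alpha,\rho}\Lambda(t)=0\ \text{ on } [a,A],\qquad \partial_2L(t,x(t),{}^CD_{a+}^{\alpha,\rho}x(t))-D_{b-}^{\alpha,\rho}\Lambda(t)=0\ \text{ on } [A,b],$$ and $$I_{A-}^{1-\alpha,\rho}\Lambda(t)-I_{b-}^{1-\alpha,\rho}\Lambda(t)=0\ \text{ at } t=a.$$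
   Context: Fix $0<a<b<\infty$, $\alpha\in(0,1)$, $\rho>0$. For $x\in C^1[a,b]$, ${}^CD_{a+}^{\alpha,\rho} x(t)=\frac{\rho^\alpha}{\Gamma(1-\alpha)}\, t^{1-\rho}\frac{d}{dt}\int_a^t \frac{\tau^{\rho-1}}{(t^\rho-\tau^\rho)^\alpha}[x(\tau)-x(a)]\,d\tau=\frac{\rho^\alpha}{\Gamma(1-\alpha)}\int_a^t (t^\rho-\tau^\rho)^{-\alpha}x'(\tau)\,d\tau$. For $c\in\{A,b\}$ and a function $f$, $I_{c-}^{1-\alpha,\rho} f(t)=\frac{\rho^{\alpha}}{\Gamma(1-\alpha)}\int_t^c (\tau^\rho-t^\rho)^{-\alpha}f(\tau)\,d\tau$ and $D_{c-}^{\alpha,\rho} f(t)=\frac{\rho^\alpha}{\Gamma(1-\alpha)}\frac{d}{dt}\int_t^c (\tau^\rho-t^\rho)^{-\alpha}f(\tau)\,d\tau$. $\partial_i$ denotes the partial derivative with respect to the $i$-th argument. $L:[a,b]\times\mathbb{R}^2\to\mathbb{R}$ is continuously differentiable with respect to its second and third arguments, and for every $x\in C^1[a,b]$ the map $t\mapsto D_{b-}^{\alpha,\rho}(\partial_3L(t,x(t),{}^CD_{a+}^{\alpha,\rho}x(t)))$ is continuous. $C^1[a,b]$ carries the norm $\|x\|=\max|x|+\max|{}^CD_{a+}^{\alpha,\rho}x|$, and local minimizers are taken with respect to this norm. *)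

theory Defs
  imports "HOL-Analysis.Analysis"
begin

definition kat_coef :: "real \<Rightarrow> real \<Rightarrow> real" where
  "kat_coef \<rho> \<alpha> = \<rho> powr \<alpha> / Gamma (1 - \<alpha>)"

definition C1_on :: "real \<Rightarrow> real \<Rightarrow> (real \<Rightarrow> real) \<Rightarrow> bool" where
  "C1_on a b x \<longleftrightarrow> (\<exists>x'. continuous_on {a..b} x' \<and>
      (\<forall>t\<in>{a..b}. (x has_vector_derivative x' t) (at t within {a..b})))"

definition caputo_kat :: "real \<Rightarrow> real \<Rightarrow> real \<Rightarrow> real \<Rightarrow> (real \<Rightarrow> real) \<Rightarrow> real \<Rightarrow> real" where
  "caputo_kat a b \<alpha> \<rho> x t = kat_coef \<rho> \<alpha> *
     integral {a..t} (\<lambda>\<tau>. (t powr \<rho> - \<tau> powr \<rho>) powr (-\<alpha>) * vector_derivative x (at \<tau> within {a..b}))"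

text \<open>Right Katugampola fractional integral I_{c-}^{1-alpha,rho}.\<close>
definition kat_int_right :: "real \<Rightarrow> real \<Rightarrow> real \<Rightarrow> (real \<Rightarrow> real) \<Rightarrow> real \<Rightarrow> real" where
  "kat_int_right \<alpha> \<rho> c f t = kat_coef \<rho> \<alpha> *
     integral {t..c} (\<lambda>\<tau>. (\<tau> powr \<rho> - t powr \<rho>) powr (-\<alpha>) * f \<tau>)"

definition kat_der_right :: "real \<Rightarrow> real \<Rightarrow> real \<Rightarrow> real \<Rightarrow> (real \<Rightarrow> real) \<Rightarrow> real \<Rightarrow> real" where
  "kat_der_right a \<alpha> \<rho> c f t = vector_derivative (\<lambda>s. kat_int_right \<alpha> \<rho> c f s) (at t within {a..c})"

definition ck_norm :: "real \<Rightarrow> real \<Rightarrow> real \<Rightarrow> real \<Rightarrow> (real \<Rightarrow> real) \<Rightarrow> real" where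
  "ck_norm a b \<alpha> \<rho> z = (SUP t\<in>{a..b}. \<bar>z t\<bar>) + (SUP t\<in>{a..b}. \<bar>caputo_kat a b \<alpha> \<rho> z t\<bar>)"

definition part2 :: "(real \<Rightarrow> real \<Rightarrow> real \<Rightarrow> real) \<Rightarrow> real \<Rightarrow> real \<Rightarrow> real \<Rightarrow> real" where
  "part2 L t u v = deriv (\<lambda>w. L t w v) u"

definition part3 :: "(real \<Rightarrow> real \<Rightarrow> real \<Rightarrow> real) \<Rightarrow> real \<Rightarrow> real \<Rightarrow> real \<Rightarrow> real" where
  "part3 L t u v = deriv (\<lambda>w. L t u w) v"

end

theory Submission
  imports Defs
begin


lemma powr_kernel_integral:
  fixes p t \<alpha> :: real
  assumes "p \<le> t" "0 < \<alpha>" "\<alpha> < 1"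
  shows "((\<lambda>\<tau>. (t - \<tau>) powr (-\<alpha>)) has_integral (t - p) powr (1-\<alpha>) / (1-\<alpha>)) {p..t}"
proof -
  let ?F = "\<lambda>\<tau>. - ((t - \<tau>) powr (1-\<alpha>) / (1-\<alpha>))"
  have "((\<lambda>\<tau>. (t - \<tau>) powr (-\<alpha>)) has_integral (?F t - ?F p)) {p..t}"
  proof (rule fundamental_theorem_of_calculus_interior_strong[where S="{}"])
    show "continuous_on {p..t} ?F"
      using assms by (intro continuous_intros continuous_on_powr') auto
    fix x assume x: "x \<in> {p<..<t} - {}"
    have "((\<lambda>\<tau>. (t - \<tau>) powr (1-\<alpha>)) has_real_derivative ((1-\<alpha>) * (t - x) powr (1-\<alpha>-1) * (-1))) (at x)"
      using x by (auto intro!: derivative_eq_intros)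
    then have "(?F has_real_derivative (t - x) powr (-\<alpha>)) (at x)"
      using assms x by (auto intro!: derivative_eq_intros)
    then show "(?F has_vector_derivative (t - x) powr (-\<alpha>)) (at x)"
      by (simp add: has_real_derivative_iff_has_vector_derivative)
  qed (use assms in auto)
  then show ?thesis by simp
qed



lemma kern_generic:
  fixes k :: "real \<Rightarrow> real \<Rightarrow> real" and f :: "real \<Rightarrow> real" and p q C \<alpha> :: real
  assumes \<alpha>: "0 < \<alpha>" "\<alpha> < 1" and C: "0 \<le> C"
    and kb: "\<And>t \<tau>. p \<le> \<tau> \<Longrightarrow> \<tau> \<le> t \<Longrightarrow> t \<le> q \<Longrightarrow> \<bar>k t \<tau>\<bar> \<le> C * (t - \<tau>) powr (-\<alpha>)"
    and kc: "continuous_on {z. p \<le> snd z \<and> snd z < fst z \<and> fst z \<le> q} (\<lambda>z. k (fst z) (snd z))"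
    and fc: "continuous_on {p..q} f"
    and fM: "\<And>\<tau>. \<tau> \<in> {p..q} \<Longrightarrow> \<bar>f \<tau>\<bar> \<le> M"
    and t: "t \<in> {p..q}"
  shows "(\<lambda>\<tau>. k t \<tau> * f \<tau>) absolutely_integrable_on {p..t}"
    and "\<bar>integral {p..t} (\<lambda>\<tau>. k t \<tau> * f \<tau>)\<bar> \<le> C * M * ((t - p) powr (1-\<alpha>) / (1-\<alpha>))"
proof -
  have M: "0 \<le> M" using fM[of p] t by auto
  have cont: "continuous_on {p..<t} (\<lambda>\<tau>. k t \<tau> * f \<tau>)"
  proof (intro continuous_intros)
    show "continuous_on {p..<t} (\<lambda>\<tau>. k t \<tau>)" (is ?thesis)
    proof -
      have "continuous_on {p..<t} (\<lambda>\<tau>. (t, \<tau>))" by (intro continuous_intros)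
      then show ?thesis
      using continuous_on_compose2[OF kc, of "{p..<t}" "\<lambda>\<tau>. (t, \<tau>)"] t
      by (auto simp: image_subset_iff)
    qed
    show "continuous_on {p..<t} f"
      using fc t by (elim continuous_on_subset) auto
  qed
  have "(\<lambda>\<tau>. k t \<tau> * f \<tau>) measurable_on {p..<t}"
    using continuous_imp_measurable_on_sets_lebesgue[OF cont]
    by (simp add: measurable_on_iff_borel_measurable)
  then have "(\<lambda>\<tau>. k t \<tau> * f \<tau>) measurable_on {p..t}"
    by (rule measurable_on_spike_set) (use t in \<open>auto intro: negligible_subset[OF negligible_sing[of t]]\<close>)
  then have meas: "(\<lambda>\<tau>. k t \<tau> * f \<tau>) \<in> borel_measurable (lebesgue_on {p..t})"
    by (simp add: measurable_on_iff_borel_measurable)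
  have gi: "((\<lambda>\<tau>. C * M * (t - \<tau>) powr (-\<alpha>)) has_integral C * M * ((t - p) powr (1-\<alpha>) / (1-\<alpha>))) {p..t}"
    using has_integral_mult_right[OF powr_kernel_integral[of p t \<alpha>]] t \<alpha> by auto
  have bnd: "norm (k t \<tau> * f \<tau>) \<le> C * M * (t - \<tau>) powr (-\<alpha>)" if "\<tau> \<in> {p..t}" for \<tau>
  proof -
    have "\<bar>k t \<tau>\<bar> * \<bar>f \<tau>\<bar> \<le> (C * (t - \<tau>) powr (-\<alpha>)) * M"
      using kb[of \<tau> t] fM[of \<tau>] that t by (intro mult_mono) auto
    then show ?thesis by (simp add: abs_mult mult_ac)
  qed
  show ai: "(\<lambda>\<tau>. k t \<tau> * f \<tau>) absolutely_integrable_on {p..t}"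
    using gi bnd meas
    by (intro measurable_bounded_by_integrable_imp_absolutely_integrable[where g="\<lambda>\<tau>. C * M * (t - \<tau>) powr (-\<alpha>)"])
       (auto simp: integrable_on_def)
  have "norm (integral {p..t} (\<lambda>\<tau>. k t \<tau> * f \<tau>)) \<le> integral {p..t} (\<lambda>\<tau>. C * M * (t - \<tau>) powr (-\<alpha>))"
    using set_lebesgue_integral_eq_integral(1)[OF ai] gi bnd by (intro integral_norm_bound_integral) (auto simp: integrable_on_def)
  then show "\<bar>integral {p..t} (\<lambda>\<tau>. k t \<tau> * f \<tau>)\<bar> \<le> C * M * ((t - p) powr (1-\<alpha>) / (1-\<alpha>))"
    using integral_unique[OF gi] by simp
qed



lemma kern_generic_cont:
  fixes k :: "real \<Rightarrow> real \<Rightarrow> real" and f :: "real \<Rightarrow> real" and p q C \<alpha> :: real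
  assumes \<alpha>: "0 < \<alpha>" "\<alpha> < 1" and C: "0 \<le> C"
    and kb: "\<And>t \<tau>. p \<le> \<tau> \<Longrightarrow> \<tau> \<le> t \<Longrightarrow> t \<le> q \<Longrightarrow> \<bar>k t \<tau>\<bar> \<le> C * (t - \<tau>) powr (-\<alpha>)"
    and kc: "continuous_on {z. p \<le> snd z \<and> snd z < fst z \<and> fst z \<le> q} (\<lambda>z. k (fst z) (snd z))"
    and fc: "continuous_on {p..q} f"
    and fM: "\<And>\<tau>. \<tau> \<in> {p..q} \<Longrightarrow> \<bar>f \<tau>\<bar> \<le> M"
    and pq: "p \<le> q"
  shows "continuous_on {p..q} (\<lambda>t. integral {p..t} (\<lambda>\<tau>. k t \<tau> * f \<tau>))"
proof -
  have M: "0 \<le> M" using fM[of p] pq by auto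
  define \<Psi> where "\<Psi> = (\<lambda>t s. (t - p) * (k t (p + s * (t - p)) * f (p + s * (t - p))))"
  have sub: "(\<Psi> t has_integral integral {p..t} (\<lambda>\<tau>. k t \<tau> * f \<tau>)) {0..1}" if t: "t \<in> {p..q}" for t
  proof (cases "t = p")
    case True
    have "\<Psi> p = (\<lambda>s. 0)" by (simp add: \<Psi>_def fun_eq_iff)
    then show ?thesis using True by simp
  next
    case False
    with t have tp: "p < t" by auto
    let ?g = "\<lambda>\<tau>. k t \<tau> * f \<tau>"
    have "?g integrable_on {p..t}"
      using set_lebesgue_integral_eq_integral(1)[OF kern_generic(1)[OF \<alpha> C kb kc fc fM t]] .
    then have gi: "(?g has_integral integral {p..t} ?g) (cbox p t)"
      by (simp add: has_integral_integral)
    have "((\<lambda>s. ?g ((t - p) *\<^sub>R s + p)) has_integral (1 / (\<bar>t - p\<bar> ^ DIM(real))) *\<^sub>R integral {p..t} ?g)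
          ((\<lambda>x. (1 / (t - p)) *\<^sub>R x + -((1 / (t - p)) *\<^sub>R p)) ` cbox p t)"
      using has_integral_affinity[OF gi, of "t - p" p] tp by simp
    moreover have "((\<lambda>x. (1 / (t - p)) *\<^sub>R x + -((1 / (t - p)) *\<^sub>R p)) ` cbox p t) = {0..1}"
    proof -
      have sq: "p * p + t * t \<noteq> p * (t * 2)"
      proof -
        have "0 < (t - p) * (t - p)" using tp by simp
        then show ?thesis by (simp add: algebra_simps)
      qed
      have "((\<lambda>x. (1 / (t - p)) *\<^sub>R x + -((1 / (t - p)) *\<^sub>R p)) ` cbox p t)
          = ((\<lambda>x. (1 / (t - p)) * x + (-(p / (t - p)))) ` {p..t})" by simp
      also have "\<dots> = {0..1}"
        using tp sq by (subst image_affinity_atLeastAtMost) (auto simp: field_simps)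
      finally show ?thesis .
    qed
    ultimately have "((\<lambda>s. ?g ((t - p) * s + p)) has_integral (1 / (t - p)) * integral {p..t} ?g) {0..1}"
      using tp by simp
    from has_integral_mult_right[OF this, of "t - p"]
    show ?thesis using tp by (simp add: \<Psi>_def mult_ac add_ac)
  qed
  have bnd: "\<bar>\<Psi> t s\<bar> \<le> C * M * (t - p) powr (1 - \<alpha>) * (1 - s) powr (-\<alpha>)"
    if t: "t \<in> {p..q}" and s: "s \<in> {0..1}" for t s
  proof (cases "t = p")
    case True
    then show ?thesis using C M by (simp add: \<Psi>_def)
  next
    case False
    with t have tp: "p < t" by auto
    define \<tau> where "\<tau> = p + s * (t - p)"
    have "s * (t - p) \<le> 1 * (t - p)" using s tp by (intro mult_right_mono) auto
    moreover have "0 \<le> s * (t - p)" using s tp by simp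
    ultimately have \<tau>: "p \<le> \<tau>" "\<tau> \<le> t" "t - \<tau> = (1 - s) * (t - p)"
      by (auto simp: \<tau>_def algebra_simps)
    have "\<bar>\<Psi> t s\<bar> = (t - p) * (\<bar>k t \<tau>\<bar> * \<bar>f \<tau>\<bar>)"
      using tp by (simp add: \<Psi>_def \<tau>_def abs_mult)
    also have "\<dots> \<le> (t - p) * ((C * (t - \<tau>) powr (-\<alpha>)) * M)"
      using kb[of \<tau> t] fM[of \<tau>] \<tau> t tp C
      by (intro mult_left_mono mult_mono) auto
    also have "\<dots> = C * M * ((t - p) * (t - p) powr (-\<alpha>)) * (1 - s) powr (-\<alpha>)"
      by (simp add: \<tau>(3) powr_mult mult_ac)
    also have "(t - p) * (t - p) powr (-\<alpha>) = (t - p) powr (1 - \<alpha>)"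
    proof -
      have "(t - p) powr (1 - \<alpha>) = (t - p) powr 1 * (t - p) powr (-\<alpha>)"
        by (subst powr_add[symmetric]) simp
      then show ?thesis using tp by simp
    qed
    finally show ?thesis by simp
  qed
  have k0: "k t t = 0" if "t \<in> {p..q}" for t
    using kb[of t t] that by simp
  have pcont: "continuous_on {p..q} (\<lambda>t. \<Psi> t s)" if s: "s \<in> {0..1}" for s
  proof (cases "s = 1")
    case True
    then show ?thesis
      using k0 by (subst continuous_on_cong[where g="\<lambda>t. 0"]) (auto simp: \<Psi>_def)
  next
    case False
    with s have s1: "s < 1" "0 \<le> s" by auto
    show ?thesis
      unfolding continuous_on_eq_continuous_within
    proof
      fix t assume t: "t \<in> {p..q}"
      show "continuous (at t within {p..q}) (\<lambda>t. \<Psi> t s)"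
      proof (cases "t = p")
        case True
        have "((\<lambda>t. \<Psi> t s) \<longlongrightarrow> 0) (at p within {p..q})"
        proof (rule Lim_null_comparison)
          show "\<forall>\<^sub>F x in at p within {p..q}. norm (\<Psi> x s) \<le> C * M * (1 - s) powr (-\<alpha>) * (x - p) powr (1 - \<alpha>)"
            using bnd s by (auto simp: eventually_at_filter mult_ac)
          have "continuous_on {p..q} (\<lambda>x. C * M * (1 - s) powr (-\<alpha>) * (x - p) powr (1 - \<alpha>))"
            using \<alpha> by (intro continuous_intros continuous_on_powr') auto
          then have "((\<lambda>x. C * M * (1 - s) powr (-\<alpha>) * (x - p) powr (1 - \<alpha>)) \<longlongrightarrow>
                 C * M * (1 - s) powr (-\<alpha>) * (p - p) powr (1 - \<alpha>)) (at p within {p..q})"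
            using pq unfolding continuous_on_def by (metis atLeastAtMost_iff order_refl)
          then show "((\<lambda>x. C * M * (1 - s) powr (-\<alpha>) * (x - p) powr (1 - \<alpha>)) \<longlongrightarrow> 0) (at p within {p..q})"
            by simp
        qed
        then show ?thesis using True by (simp add: continuous_within \<Psi>_def)
      next
        case False
        with t have tp: "p < t" by auto
        have h1: "p + s * (x - p) < x" if "p < x" for x
        proof -
          have "s * (x - p) < 1 * (x - p)" using s1 that by (intro mult_strict_right_mono) auto
          then show ?thesis by simp
        qed
        have h2: "p \<le> p + s * (x - p)" if "p < x" for x
          using s1 that by simp
        have c1: "continuous_on {p<..q} (\<lambda>t. \<Psi> t s)"
          unfolding \<Psi>_def
        proof (intro continuous_intros)
          have "continuous_on {p<..q} (\<lambda>t. (t, p + s * (t - p)))" by (intro continuous_intros)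
          moreover have "(\<lambda>t. (t, p + s * (t - p))) ` {p<..q} \<subseteq> {z. p \<le> snd z \<and> snd z < fst z \<and> fst z \<le> q}"
            using h1 h2 by auto
          ultimately show "continuous_on {p<..q} (\<lambda>x. k x (p + s * (x - p)))"
            using continuous_on_compose2[OF kc, of "{p<..q}" "\<lambda>t. (t, p + s * (t - p))"] by auto
          have "continuous_on {p<..q} (\<lambda>t. p + s * (t - p))" by (intro continuous_intros)
          moreover have "(\<lambda>t. p + s * (t - p)) ` {p<..q} \<subseteq> {p..q}"
            using h1 h2 by force
          ultimately show "continuous_on {p<..q} (\<lambda>x. f (p + s * (x - p)))"
            using continuous_on_compose2[OF fc] by blast
        qed
        have "at t within {p..q} = at t within {p<..q}"
          by (rule at_within_nhd[of _ "{p<..}"]) (use tp in auto)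
        then show ?thesis
          using c1 t tp by (simp add: continuous_on_eq_continuous_within)
      qed
    qed
  qed
  define h where "h s = C * M * (q - p) powr (1 - \<alpha>) * (1 - s) powr (-\<alpha>)" for s
  have hi: "h integrable_on {0..1}"
  proof -
    have "(\<lambda>s. (1 - s) powr (-\<alpha>)) integrable_on {0..1}"
      using powr_kernel_integral[of 0 1 \<alpha>] \<alpha> by (auto simp: integrable_on_def)
    then show ?thesis unfolding h_def by (rule integrable_on_mult_right)
  qed
  have hb: "norm (\<Psi> t s) \<le> h s" if "t \<in> {p..q}" "s \<in> {0..1}" for t s
  proof -
    have "(t - p) powr (1 - \<alpha>) \<le> (q - p) powr (1 - \<alpha>)"
      using that \<alpha> by (intro powr_mono2) auto
    then have "C * M * (t - p) powr (1 - \<alpha>) * (1 - s) powr (-\<alpha>) \<le> h s"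
      unfolding h_def using C M by (intro mult_right_mono mult_left_mono) auto
    then show ?thesis using bnd[OF that] by simp
  qed
  have "continuous_on {p..q} (\<lambda>t. integral {0..1} (\<Psi> t))"
    unfolding continuous_on_sequentially
  proof (intro allI ballI impI)
    fix x :: "nat \<Rightarrow> real" and t0 assume t0: "t0 \<in> {p..q}" and x: "(\<forall>n. x n \<in> {p..q}) \<and> x \<longlonglongrightarrow> t0"
    have "(\<lambda>n. integral {0..1} (\<Psi> (x n))) \<longlonglongrightarrow> integral {0..1} (\<Psi> t0)"
    proof (rule dominated_convergence(2)[where h=h])
      show "\<Psi> (x n) integrable_on {0..1}" for n using sub x by (auto simp: integrable_on_def)
      show "h integrable_on {0..1}" by (rule hi)
      show "norm (\<Psi> (x n) s) \<le> h s" if "s \<in> {0..1}" for n s using hb x that by auto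
      show "(\<lambda>n. \<Psi> (x n) s) \<longlonglongrightarrow> \<Psi> t0 s" if "s \<in> {0..1}" for s
        using pcont[OF that] t0 x unfolding continuous_on_sequentially by (auto simp: o_def)
    qed
    then show "((\<lambda>t. integral {0..1} (\<Psi> t)) \<circ> x) \<longlonglongrightarrow> integral {0..1} (\<Psi> t0)"
      by (simp add: o_def)
  qed
  then show ?thesis
    by (rule continuous_on_eq) (use sub in \<open>auto intro: integral_unique\<close>)
qed



definition KK :: "real \<Rightarrow> real \<Rightarrow> real \<Rightarrow> real \<Rightarrow> real" where
  "KK \<rho> \<alpha> t \<tau> = (t powr \<rho> - \<tau> powr \<rho>) powr (-\<alpha>)"

definition mm :: "real \<Rightarrow> real \<Rightarrow> real \<Rightarrow> real" where
  "mm \<rho> a b = \<rho> * min (a powr (\<rho> - 1)) (b powr (\<rho> - 1))"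

lemma mm_pos: "0 < a \<Longrightarrow> 0 < b \<Longrightarrow> 0 < \<rho> \<Longrightarrow> 0 < mm \<rho> a b"
  by (simp add: mm_def)

lemma powr_diff_lower:
  fixes a b \<rho> t \<tau> :: real
  assumes "0 < a" "0 < \<rho>" "a \<le> \<tau>" "\<tau> \<le> t" "t \<le> b"
  shows "mm \<rho> a b * (t - \<tau>) \<le> t powr \<rho> - \<tau> powr \<rho>"
proof (cases "\<tau> = t")
  case True then show ?thesis by simp
next
  case False
  with assms have lt: "\<tau> < t" by auto
  have "\<exists>z. \<tau> < z \<and> z < t \<and> (t powr \<rho> - \<tau> powr \<rho> = (t - \<tau>) * (\<rho> * z powr (\<rho> - 1)))"
  proof (rule MVT2[OF lt])
    fix x assume "\<tau> \<le> x" "x \<le> t"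
    then have "0 < x" using assms by auto
    then show "((\<lambda>x. x powr \<rho>) has_real_derivative \<rho> * x powr (\<rho> - 1)) (at x)"
      by (auto intro!: derivative_eq_intros)
  qed
  then obtain z where z: "\<tau> < z" "z < t" "t powr \<rho> - \<tau> powr \<rho> = (t - \<tau>) * (\<rho> * z powr (\<rho> - 1))"
    by blast
  have "min (a powr (\<rho> - 1)) (b powr (\<rho> - 1)) \<le> z powr (\<rho> - 1)"
  proof (cases "0 \<le> \<rho> - 1")
    case True
    then have "a powr (\<rho> - 1) \<le> z powr (\<rho> - 1)" using z assms by (intro powr_mono2) auto
    then show ?thesis by simp
  next
    case False
    then have "b powr (\<rho> - 1) \<le> z powr (\<rho> - 1)" using z assms by (intro powr_mono2') auto
    then show ?thesis by simp
  qed
  then have "mm \<rho> a b \<le> \<rho> * z powr (\<rho> - 1)" unfolding mm_def using assms by simp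
  then show ?thesis using z lt by (simp add: mult_right_mono mult.commute)
qed

lemma KK_bound:
  fixes a b \<rho> \<alpha> t \<tau> :: real
  assumes "0 < a" "0 < \<rho>" "0 < \<alpha>" "a \<le> \<tau>" "\<tau> \<le> t" "t \<le> b"
  shows "\<bar>KK \<rho> \<alpha> t \<tau>\<bar> \<le> mm \<rho> a b powr (-\<alpha>) * (t - \<tau>) powr (-\<alpha>)"
proof (cases "\<tau> = t")
  case True then show ?thesis by (simp add: KK_def)
next
  case False
  with assms have lt: "\<tau> < t" by auto
  have m: "0 < mm \<rho> a b" using assms by (intro mm_pos) auto
  have "0 < mm \<rho> a b * (t - \<tau>)" using m lt by simp
  moreover have "mm \<rho> a b * (t - \<tau>) \<le> t powr \<rho> - \<tau> powr \<rho>"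
    using powr_diff_lower assms by blast
  ultimately have "(t powr \<rho> - \<tau> powr \<rho>) powr (-\<alpha>) \<le> (mm \<rho> a b * (t - \<tau>)) powr (-\<alpha>)"
    using assms by (intro powr_mono2') auto
  then show ?thesis by (simp add: KK_def powr_mult)
qed

lemma KK_cont_left:
  fixes a b \<rho> \<alpha> :: real
  assumes "0 < a" "0 < \<rho>"
  shows "continuous_on {z. a \<le> snd z \<and> snd z < fst z \<and> fst z \<le> b} (\<lambda>z. KK \<rho> \<alpha> (fst z) (snd z))"
  unfolding KK_def
proof (intro continuous_intros ballI)
  fix z :: "real \<times> real" assume z: "z \<in> {z. a \<le> snd z \<and> snd z < fst z \<and> fst z \<le> b}"
  then show "fst z \<noteq> 0" "snd z \<noteq> 0" using assms by auto
  have "snd z powr \<rho> < fst z powr \<rho>" using z assms by (intro powr_less_mono2) auto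
  then show "fst z powr \<rho> - snd z powr \<rho> \<noteq> 0" by simp
qed

lemma KK_cont_right:
  fixes a c \<rho> \<alpha> :: real
  assumes "0 < a" "0 < \<rho>"
  shows "continuous_on {z. -c \<le> snd z \<and> snd z < fst z \<and> fst z \<le> -a} (\<lambda>z. KK \<rho> \<alpha> (- snd z) (- fst z))"
  unfolding KK_def
proof (intro continuous_intros ballI)
  fix z :: "real \<times> real" assume z: "z \<in> {z. -c \<le> snd z \<and> snd z < fst z \<and> fst z \<le> -a}"
  then show "- fst z \<noteq> 0" "- snd z \<noteq> 0" using assms by auto
  have "(- fst z) powr \<rho> < (- snd z) powr \<rho>" using z assms by (intro powr_less_mono2) auto
  then show "(- snd z) powr \<rho> - (- fst z) powr \<rho> \<noteq> 0" by simp
qed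



lemma cont_bound:
  fixes f :: "real \<Rightarrow> real"
  assumes "continuous_on {p..q} f"
  obtains M where "\<And>\<tau>. \<tau> \<in> {p..q} \<Longrightarrow> \<bar>f \<tau>\<bar> \<le> M"
proof -
  have "bounded (f ` {p..q})"
    by (rule compact_imp_bounded[OF compact_continuous_image[OF assms compact_Icc]])
  then obtain M where "\<And>y. y \<in> f ` {p..q} \<Longrightarrow> norm y \<le> M" by (auto simp: bounded_iff)
  then show ?thesis by (auto intro!: that)
qed

lemma left_res:
  fixes a b \<rho> \<alpha> :: real and f :: "real \<Rightarrow> real"
  assumes a: "0 < a" "a \<le> b" and \<rho>: "0 < \<rho>" and \<alpha>: "0 < \<alpha>" "\<alpha> < 1"
    and fc: "continuous_on {a..b} f"
  shows "\<And>t. t \<in> {a..b} \<Longrightarrow> (\<lambda>\<tau>. KK \<rho> \<alpha> t \<tau> * f \<tau>) absolutely_integrable_on {a..t}"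
    and "continuous_on {a..b} (\<lambda>t. integral {a..t} (\<lambda>\<tau>. KK \<rho> \<alpha> t \<tau> * f \<tau>))"
proof -
  obtain M where M: "\<And>\<tau>. \<tau> \<in> {a..b} \<Longrightarrow> \<bar>f \<tau>\<bar> \<le> M" using cont_bound[OF fc] by blast
  have C: "0 \<le> mm \<rho> a b powr (-\<alpha>)" by simp
  have kb: "\<And>t \<tau>. a \<le> \<tau> \<Longrightarrow> \<tau> \<le> t \<Longrightarrow> t \<le> b \<Longrightarrow> \<bar>KK \<rho> \<alpha> t \<tau>\<bar> \<le> mm \<rho> a b powr (-\<alpha>) * (t - \<tau>) powr (-\<alpha>)"
    using KK_bound a \<rho> \<alpha> by blast
  note kc = KK_cont_left[OF a(1) \<rho>, of b \<alpha>]
  show "\<And>t. t \<in> {a..b} \<Longrightarrow> (\<lambda>\<tau>. KK \<rho> \<alpha> t \<tau> * f \<tau>) absolutely_integrable_on {a..t}"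
    using kern_generic(1)[OF \<alpha> C kb kc fc M] by blast
  show "continuous_on {a..b} (\<lambda>t. integral {a..t} (\<lambda>\<tau>. KK \<rho> \<alpha> t \<tau> * f \<tau>))"
    using kern_generic_cont[OF \<alpha> C kb kc fc M a(2)] by blast
qed

lemma right_res:
  fixes a c \<rho> \<alpha> :: real and f :: "real \<Rightarrow> real"
  assumes a: "0 < a" "a \<le> c" and \<rho>: "0 < \<rho>" and \<alpha>: "0 < \<alpha>" "\<alpha> < 1"
    and fc: "continuous_on {a..c} f"
  shows "\<And>t. t \<in> {a..c} \<Longrightarrow> (\<lambda>\<tau>. KK \<rho> \<alpha> \<tau> t * f \<tau>) absolutely_integrable_on {t..c}"
    and "continuous_on {a..c} (\<lambda>t. integral {t..c} (\<lambda>\<tau>. KK \<rho> \<alpha> \<tau> t * f \<tau>))"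
proof -
  define g where "g = (\<lambda>\<sigma>. f (- \<sigma>))"
  have gc: "continuous_on {-c..-a} g"
    unfolding g_def by (rule continuous_on_compose2[OF fc]) (auto intro!: continuous_intros)
  obtain M where M: "\<And>\<tau>. \<tau> \<in> {-c..-a} \<Longrightarrow> \<bar>g \<tau>\<bar> \<le> M" using cont_bound[OF gc] by blast
  have C: "0 \<le> mm \<rho> a c powr (-\<alpha>)" by simp
  have kb: "\<And>t \<tau>. -c \<le> \<tau> \<Longrightarrow> \<tau> \<le> t \<Longrightarrow> t \<le> -a \<Longrightarrow> \<bar>KK \<rho> \<alpha> (-\<tau>) (-t)\<bar> \<le> mm \<rho> a c powr (-\<alpha>) * (t - \<tau>) powr (-\<alpha>)"
  proof -
    fix t \<tau> :: real assume "-c \<le> \<tau>" "\<tau> \<le> t" "t \<le> -a"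
    then have "\<bar>KK \<rho> \<alpha> (-\<tau>) (-t)\<bar> \<le> mm \<rho> a c powr (-\<alpha>) * (-\<tau> - -t) powr (-\<alpha>)"
      using a \<rho> \<alpha> by (intro KK_bound) auto
    then show "\<bar>KK \<rho> \<alpha> (-\<tau>) (-t)\<bar> \<le> mm \<rho> a c powr (-\<alpha>) * (t - \<tau>) powr (-\<alpha>)" by simp
  qed
  note kc = KK_cont_right[OF a(1) \<rho>, of c \<alpha>]
  have ac: "-c \<le> -a" using a by simp
  note G1 = kern_generic(1)[OF \<alpha> C kb kc gc M]
  note G2 = kern_generic_cont[OF \<alpha> C kb kc gc M ac]
  show "(\<lambda>\<tau>. KK \<rho> \<alpha> \<tau> t * f \<tau>) absolutely_integrable_on {t..c}" if t: "t \<in> {a..c}" for t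
  proof -
    have "(\<lambda>\<sigma>. KK \<rho> \<alpha> (-\<sigma>) (-(-t)) * g \<sigma>) absolutely_integrable_on {-c..-t}"
      using G1[of "-t"] t by auto
    then have "(\<lambda>\<sigma>. (\<lambda>\<tau>. KK \<rho> \<alpha> \<tau> t * f \<tau>) (-\<sigma>)) absolutely_integrable_on {-c..-t}"
      by (simp add: g_def)
    then show ?thesis by (subst (asm) absolutely_integrable_reflect_real)
  qed
  have "continuous_on {a..c} (\<lambda>t. integral {-c..-t} (\<lambda>\<sigma>. KK \<rho> \<alpha> (-\<sigma>) (-(-t)) * g \<sigma>))"
    by (rule continuous_on_compose2[OF G2]) (auto intro!: continuous_intros)
  moreover have "integral {-c..-t} (\<lambda>\<sigma>. KK \<rho> \<alpha> (-\<sigma>) (-(-t)) * g \<sigma>) = integral {t..c} (\<lambda>\<tau>. KK \<rho> \<alpha> \<tau> t * f \<tau>)" for t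
  proof -
    have "integral {-c..-t} (\<lambda>\<sigma>. KK \<rho> \<alpha> (-\<sigma>) (-(-t)) * g \<sigma>) = integral {-c..-t} (\<lambda>\<sigma>. (\<lambda>\<tau>. KK \<rho> \<alpha> \<tau> t * f \<tau>) (-\<sigma>))"
      by (simp add: g_def)
    also have "\<dots> = integral {t..c} (\<lambda>\<tau>. KK \<rho> \<alpha> \<tau> t * f \<tau>)"
      using Henstock_Kurzweil_Integration.integral_reflect_real[of c t "\<lambda>\<tau>. KK \<rho> \<alpha> \<tau> t * f \<tau>"] by simp
    finally show ?thesis .
  qed
  ultimately show "continuous_on {a..c} (\<lambda>t. integral {t..c} (\<lambda>\<tau>. KK \<rho> \<alpha> \<tau> t * f \<tau>))"
    by simp
qed



lemma lborel_set_int: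
  fixes h :: "real \<Rightarrow> real"
  assumes hm: "h \<in> borel_measurable borel" and hi: "h absolutely_integrable_on {p..q}"
  shows "set_integrable lborel {p..q} h" "(LINT x:{p..q}|lborel. h x) = integral {p..q} h"
proof -
  have m: "(\<lambda>x. indicator {p..q} x *\<^sub>R h x) \<in> lborel \<rightarrow>\<^sub>M borel"
    using hm by (simp add: measurable_lborel1)
  show si: "set_integrable lborel {p..q} h"
    using hi integrable_completion[OF m] unfolding set_integrable_def by simp
  show "(LINT x:{p..q}|lborel. h x) = integral {p..q} h"
    by (rule set_borel_integral_eq_integral(2)[OF si])
qed

lemma clamp_cont:
  fixes f :: "real \<Rightarrow> real"
  assumes "continuous_on {a..b} f" "a \<le> b"
  shows "continuous_on UNIV (\<lambda>t. f (max a (min b t)))"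
  by (rule continuous_on_compose2[OF assms(1)]) (use assms(2) in \<open>auto intro!: continuous_intros\<close>)

lemma clamp_borel:
  fixes f :: "real \<Rightarrow> real"
  assumes "continuous_on {a..b} f" "a \<le> b"
  shows "(\<lambda>t. f (max a (min b t))) \<in> borel_measurable borel"
  by (rule borel_measurable_continuous_onI[OF clamp_cont[OF assms]])

lemma KK_borel: "(\<lambda>z. KK \<rho> \<alpha> (fst z) (snd z)) \<in> borel_measurable (lborel \<Otimes>\<^sub>M lborel)"
  unfolding KK_def by measurable



lemma FF_props:
  fixes a A b \<rho> \<alpha> :: real and \<Lambda> g :: "real \<Rightarrow> real"
  assumes a: "0 < a" "a \<le> A" "A \<le> b" and \<rho>: "0 < \<rho>" and \<alpha>: "0 < \<alpha>" "\<alpha> < 1"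
    and \<Lambda>c: "continuous_on {a..b} \<Lambda>" and gc: "continuous_on {a..b} g"
  defines "F \<equiv> \<lambda>z. indicator {z. A \<le> fst z \<and> fst z \<le> b \<and> a \<le> snd z \<and> snd z \<le> fst z} z *
      (\<Lambda> (max a (min b (fst z))) * KK \<rho> \<alpha> (fst z) (snd z) * g (max a (min b (snd z))))"
  shows "F \<in> borel_measurable (lborel \<Otimes>\<^sub>M lborel)"
    and "\<And>t. integrable lborel (\<lambda>\<tau>. F (t,\<tau>))"
    and "\<And>t. (\<integral>\<tau>. F (t,\<tau>) \<partial>lborel) = indicator {A..b} t * (\<Lambda> t * integral {a..t} (\<lambda>\<tau>. KK \<rho> \<alpha> t \<tau> * g \<tau>))"
    and "\<And>\<tau>. integrable lborel (\<lambda>t. F (t,\<tau>))"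
    and "\<And>\<tau>. (\<integral>t. F (t,\<tau>) \<partial>lborel) = indicator {a..b} \<tau> * (g \<tau> * integral {max A \<tau>..b} (\<lambda>t. KK \<rho> \<alpha> t \<tau> * \<Lambda> t))"
proof -
  define \<Lambda>e where "\<Lambda>e = (\<lambda>t. \<Lambda> (max a (min b t)))"
  define ge where "ge = (\<lambda>t. g (max a (min b t)))"
  have ab: "a \<le> b" using a by simp
  have \<Lambda>em[measurable]: "\<Lambda>e \<in> borel_measurable borel" unfolding \<Lambda>e_def by (rule clamp_borel[OF \<Lambda>c ab])
  have gem[measurable]: "ge \<in> borel_measurable borel" unfolding ge_def by (rule clamp_borel[OF gc ab])
  have \<Lambda>ec: "continuous_on {a..b} \<Lambda>e" unfolding \<Lambda>e_def
    using clamp_cont[OF \<Lambda>c ab] by (rule continuous_on_subset) auto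
  have gec: "continuous_on {a..b} ge" unfolding ge_def
    using clamp_cont[OF gc ab] by (rule continuous_on_subset) auto
  have Fe: "F = (\<lambda>z. indicator {z. A \<le> fst z \<and> fst z \<le> b \<and> a \<le> snd z \<and> snd z \<le> fst z} z *
      (\<Lambda>e (fst z) * KK \<rho> \<alpha> (fst z) (snd z) * ge (snd z)))"
    unfolding F_def \<Lambda>e_def ge_def ..
  show "F \<in> borel_measurable (lborel \<Otimes>\<^sub>M lborel)"
    unfolding Fe KK_def by measurable
  {
    fix t :: real
    have "integrable lborel (\<lambda>\<tau>. F (t,\<tau>)) \<and>
      (\<integral>\<tau>. F (t,\<tau>) \<partial>lborel) = indicator {A..b} t * (\<Lambda> t * integral {a..t} (\<lambda>\<tau>. KK \<rho> \<alpha> t \<tau> * g \<tau>))"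
    proof (cases "t \<in> {A..b}")
      case True
      define h where "h = (\<lambda>\<tau>. KK \<rho> \<alpha> t \<tau> * ge \<tau>)"
      have hm: "h \<in> borel_measurable borel" unfolding h_def KK_def by measurable
      have hi: "h absolutely_integrable_on {a..t}"
        unfolding h_def using left_res(1)[OF a(1) ab \<rho> \<alpha> gec, of t] True a by auto
      note S = lborel_set_int[OF hm hi]
      have eq: "(\<lambda>\<tau>. F (t,\<tau>)) = (\<lambda>\<tau>. \<Lambda> t * (indicator {a..t} \<tau> *\<^sub>R h \<tau>))"
        using True a by (auto simp: Fe h_def \<Lambda>e_def indicator_def fun_eq_iff)
      have ie: "integral {a..t} h = integral {a..t} (\<lambda>\<tau>. KK \<rho> \<alpha> t \<tau> * g \<tau>)"
        using True by (intro integral_cong) (auto simp: h_def ge_def)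
      show ?thesis
        using S True unfolding eq set_integrable_def set_lebesgue_integral_def
        by (simp add: ie)
    next
      case False
      then have eq: "(\<lambda>\<tau>. F (t,\<tau>)) = (\<lambda>\<tau>. 0)" by (auto simp: Fe indicator_def fun_eq_iff)
      show ?thesis using False unfolding eq by simp
    qed
  }
  then show "\<And>t. integrable lborel (\<lambda>\<tau>. F (t,\<tau>))"
    and "\<And>t. (\<integral>\<tau>. F (t,\<tau>) \<partial>lborel) = indicator {A..b} t * (\<Lambda> t * integral {a..t} (\<lambda>\<tau>. KK \<rho> \<alpha> t \<tau> * g \<tau>))"
    by auto
  {
    fix \<tau> :: real
    have "integrable lborel (\<lambda>t. F (t,\<tau>)) \<and>
      (\<integral>t. F (t,\<tau>) \<partial>lborel) = indicator {a..b} \<tau> * (g \<tau> * integral {max A \<tau>..b} (\<lambda>t. KK \<rho> \<alpha> t \<tau> * \<Lambda> t))"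
    proof (cases "\<tau> \<in> {a..b}")
      case True
      define h where "h = (\<lambda>t. KK \<rho> \<alpha> t \<tau> * \<Lambda>e t)"
      have hm: "h \<in> borel_measurable borel" unfolding h_def KK_def by measurable
      have hi0: "h absolutely_integrable_on {\<tau>..b}"
        unfolding h_def using right_res(1)[OF a(1) ab \<rho> \<alpha> \<Lambda>ec, of \<tau>] True a by auto
      have hi: "h absolutely_integrable_on {max A \<tau>..b}"
        by (rule set_integrable_subset[OF hi0]) auto
      note S = lborel_set_int[OF hm hi]
      have eq: "(\<lambda>t. F (t,\<tau>)) = (\<lambda>t. g \<tau> * (indicator {max A \<tau>..b} t *\<^sub>R h t))"
        using True a by (auto simp: Fe h_def ge_def indicator_def fun_eq_iff)
      have ie: "integral {max A \<tau>..b} h = integral {max A \<tau>..b} (\<lambda>t. KK \<rho> \<alpha> t \<tau> * \<Lambda> t)"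
        using True a by (intro integral_cong) (auto simp: h_def \<Lambda>e_def)
      show ?thesis
        using S True unfolding eq set_integrable_def set_lebesgue_integral_def
        by (simp add: ie)
    next
      case False
      then have eq: "(\<lambda>t. F (t,\<tau>)) = (\<lambda>t. 0)" by (auto simp: Fe indicator_def fun_eq_iff)
      show ?thesis using False unfolding eq by simp
    qed
  }
  then show "\<And>\<tau>. integrable lborel (\<lambda>t. F (t,\<tau>))"
    and "\<And>\<tau>. (\<integral>t. F (t,\<tau>) \<partial>lborel) = indicator {a..b} \<tau> * (g \<tau> * integral {max A \<tau>..b} (\<lambda>t. KK \<rho> \<alpha> t \<tau> * \<Lambda> t))"
    by auto
qed



lemma fubini_tri:
  fixes a A b \<rho> \<alpha> :: real and \<Lambda> g :: "real \<Rightarrow> real"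
  assumes a: "0 < a" "a \<le> A" "A \<le> b" and \<rho>: "0 < \<rho>" and \<alpha>: "0 < \<alpha>" "\<alpha> < 1"
    and \<Lambda>c: "continuous_on {a..b} \<Lambda>" and gc: "continuous_on {a..b} g"
  shows "integral {A..b} (\<lambda>t. \<Lambda> t * integral {a..t} (\<lambda>\<tau>. KK \<rho> \<alpha> t \<tau> * g \<tau>))
       = integral {a..b} (\<lambda>\<tau>. g \<tau> * integral {max A \<tau>..b} (\<lambda>t. KK \<rho> \<alpha> t \<tau> * \<Lambda> t))"
proof -
  define T where "T = {z :: real \<times> real. A \<le> fst z \<and> fst z \<le> b \<and> a \<le> snd z \<and> snd z \<le> fst z}"
  define F where "F = (\<lambda>z. indicator T z *
      (\<Lambda> (max a (min b (fst z))) * KK \<rho> \<alpha> (fst z) (snd z) * g (max a (min b (snd z)))))"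
  define Fa where "Fa = (\<lambda>z. indicator T z *
      (\<bar>\<Lambda> (max a (min b (fst z)))\<bar> * KK \<rho> \<alpha> (fst z) (snd z) * \<bar>g (max a (min b (snd z)))\<bar>))"
  have ab: "a \<le> b" using a by simp
  have P1: "F \<in> borel_measurable (lborel \<Otimes>\<^sub>M lborel)"
    unfolding F_def T_def by (rule FF_props(1)[OF a \<rho> \<alpha> \<Lambda>c gc])
  have P2: "\<And>t. integrable lborel (\<lambda>\<tau>. F (t,\<tau>))"
    unfolding F_def T_def by (rule FF_props(2)[OF a \<rho> \<alpha> \<Lambda>c gc])
  have P3: "\<And>t. (\<integral>\<tau>. F (t,\<tau>) \<partial>lborel) = indicator {A..b} t * (\<Lambda> t * integral {a..t} (\<lambda>\<tau>. KK \<rho> \<alpha> t \<tau> * g \<tau>))"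
    unfolding F_def T_def by (rule FF_props(3)[OF a \<rho> \<alpha> \<Lambda>c gc])
  have P5: "\<And>\<tau>. (\<integral>t. F (t,\<tau>) \<partial>lborel) = indicator {a..b} \<tau> * (g \<tau> * integral {max A \<tau>..b} (\<lambda>t. KK \<rho> \<alpha> t \<tau> * \<Lambda> t))"
    unfolding F_def T_def by (rule FF_props(5)[OF a \<rho> \<alpha> \<Lambda>c gc])
  have \<Lambda>ac: "continuous_on {a..b} (\<lambda>t. \<bar>\<Lambda> t\<bar>)" using \<Lambda>c by (intro continuous_intros)
  have gac: "continuous_on {a..b} (\<lambda>t. \<bar>g t\<bar>)" using gc by (intro continuous_intros)
  have Pa3: "\<And>t. (\<integral>\<tau>. Fa (t,\<tau>) \<partial>lborel) = indicator {A..b} t * (\<bar>\<Lambda> t\<bar> * integral {a..t} (\<lambda>\<tau>. KK \<rho> \<alpha> t \<tau> * \<bar>g \<tau>\<bar>))"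
    unfolding Fa_def T_def by (rule FF_props(3)[OF a \<rho> \<alpha> \<Lambda>ac gac])
  have nF: "norm (F z) = Fa z" for z
    by (simp add: F_def Fa_def abs_mult KK_def)
  have Phic: "continuous_on {A..b} (\<lambda>t. \<bar>\<Lambda> t\<bar> * integral {a..t} (\<lambda>\<tau>. KK \<rho> \<alpha> t \<tau> * \<bar>g \<tau>\<bar>))"
  proof (rule continuous_on_subset[of "{a..b}"])
    show "continuous_on {a..b} (\<lambda>t. \<bar>\<Lambda> t\<bar> * integral {a..t} (\<lambda>\<tau>. KK \<rho> \<alpha> t \<tau> * \<bar>g \<tau>\<bar>))"
      using \<Lambda>c left_res(2)[OF a(1) ab \<rho> \<alpha> gac] by (intro continuous_intros)
  qed (use a in auto)
  have i1: "integrable lborel (\<lambda>t. \<integral>\<tau>. norm (F (t,\<tau>)) \<partial>lborel)"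
    using borel_integrable_atLeastAtMost'[OF Phic]
    unfolding nF Pa3 set_integrable_def by simp
  have intF: "integrable (lborel \<Otimes>\<^sub>M lborel) F"
    by (rule lborel_pair.Fubini_integrable[OF P1 i1]) (simp add: P2)
  have intF': "integrable (lborel \<Otimes>\<^sub>M lborel) (\<lambda>(t,\<tau>). F (t,\<tau>))"
    using intF by simp
  have fub: "(\<integral>\<tau>. (\<integral>t. F (t,\<tau>) \<partial>lborel) \<partial>lborel) = (\<integral>t. (\<integral>\<tau>. F (t,\<tau>) \<partial>lborel) \<partial>lborel)"
    using lborel_pair.Fubini_integral[OF intF'] by simp
  define Phi where "Phi = (\<lambda>t. \<Lambda> t * integral {a..t} (\<lambda>\<tau>. KK \<rho> \<alpha> t \<tau> * g \<tau>))"
  define Psi where "Psi = (\<lambda>\<tau>. g \<tau> * integral {max A \<tau>..b} (\<lambda>t. KK \<rho> \<alpha> t \<tau> * \<Lambda> t))"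
  have Phic': "continuous_on {A..b} Phi"
  proof (rule continuous_on_subset[of "{a..b}"])
    show "continuous_on {a..b} Phi"
      unfolding Phi_def using \<Lambda>c left_res(2)[OF a(1) ab \<rho> \<alpha> gc] by (intro continuous_intros)
  qed (use a in auto)
  have si1: "set_integrable lborel {A..b} Phi" by (rule borel_integrable_atLeastAtMost'[OF Phic'])
  have "integrable (lborel \<Otimes>\<^sub>M lborel) (\<lambda>(x,y). F (y,x))"
    by (rule lborel_pair.integrable_product_swap[OF intF])
  from lborel_pair.integrable_fst'[OF this]
  have "integrable lborel (\<lambda>\<tau>. \<integral>t. F (t,\<tau>) \<partial>lborel)" by simp
  then have si2: "set_integrable lborel {a..b} Psi"
    unfolding set_integrable_def Psi_def P5 by simp
  have "integral {A..b} Phi = (LINT t:{A..b}|lborel. Phi t)"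
    using set_borel_integral_eq_integral(2)[OF si1] by simp
  also have "\<dots> = (\<integral>t. (\<integral>\<tau>. F (t,\<tau>) \<partial>lborel) \<partial>lborel)"
    unfolding set_lebesgue_integral_def P3 Phi_def by simp
  also have "\<dots> = (\<integral>\<tau>. (\<integral>t. F (t,\<tau>) \<partial>lborel) \<partial>lborel)" using fub by simp
  also have "\<dots> = (LINT \<tau>:{a..b}|lborel. Psi \<tau>)"
    unfolding set_lebesgue_integral_def P5 Psi_def by simp
  also have "\<dots> = integral {a..b} Psi"
    using set_borel_integral_eq_integral(2)[OF si2] by simp
  finally show ?thesis unfolding Phi_def Psi_def .
qed



lemma mvt_any:
  fixes f f' :: "real \<Rightarrow> real"
  assumes d: "\<And>x. (f has_real_derivative f' x) (at x)"
  shows "\<exists>\<xi>. \<bar>\<xi> - x\<bar> \<le> \<bar>y - x\<bar> \<and> f y - f x = (y - x) * f' \<xi>"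
proof -
  have hd: "(f has_derivative (\<lambda>h. h * f' z)) (at z within S)" for z S
  proof -
    have e: "(\<lambda>h. h * f' z) = (*) (f' z)" by (auto simp: fun_eq_iff)
    show ?thesis unfolding e
      using has_field_derivative_imp_has_derivative[OF d[of z]] by (rule has_derivative_at_withinI)
  qed
  show ?thesis
  proof (cases "x \<le> y")
    case True
    from mvt_very_simple[OF True hd] obtain \<xi> where "\<xi> \<in> {x..y}" "f y - f x = (y - x) * f' \<xi>" by auto
    then show ?thesis by (intro exI[of _ \<xi>]) auto
  next
    case False
    then have "y \<le> x" by simp
    from mvt_very_simple[OF this hd] obtain \<xi> where "\<xi> \<in> {y..x}" "f x - f y = (x - y) * f' \<xi>" by auto
    then show ?thesis by (intro exI[of _ \<xi>]) (auto simp: algebra_simps)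
  qed
qed

lemma line_deriv0:
  fixes G :: "real \<Rightarrow> real \<Rightarrow> real"
  assumes d2: "\<And>u v. (\<lambda>w. G w v) differentiable (at u)"
    and d3: "\<And>u v. (\<lambda>w. G u w) differentiable (at v)"
    and c2: "continuous_on UNIV (\<lambda>z. deriv (\<lambda>w. G w (snd z)) (fst z))"
  shows "((\<lambda>e. G (u + e * p) (v + e * q)) has_real_derivative
            (p * deriv (\<lambda>w. G w v) u + q * deriv (\<lambda>w. G u w) v)) (at 0)"
proof -
  define c where "c = deriv (\<lambda>w. G w v) u"
  define D where "D = (\<lambda>e. G (u + e * p) (v + e * q) - G u (v + e * q))"
  have dd2: "((\<lambda>w. G w v') has_real_derivative deriv (\<lambda>w. G w v') u') (at u')" for u' v'
    using d2 DERIV_deriv_iff_real_differentiable by blast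
  have dd3: "((\<lambda>w. G u' w) has_real_derivative deriv (\<lambda>w. G u' w) v') (at v')" for u' v'
    using d3 DERIV_deriv_iff_real_differentiable by blast
  have part2: "((\<lambda>e. G u (v + e * q)) has_real_derivative deriv (\<lambda>w. G u w) v * q) (at 0)"
  proof -
    have g: "((\<lambda>e. v + e * q) has_real_derivative q) (at 0)" by (auto intro!: derivative_eq_intros)
    have f: "((\<lambda>w. G u w) has_real_derivative deriv (\<lambda>w. G u w) v) (at ((\<lambda>e. v + e * q) 0))"
      using dd3 by simp
    show ?thesis using DERIV_chain2[OF f g] by simp
  qed
  have part1: "(D has_real_derivative p * c) (at 0)"
    unfolding DERIV_def
  proof (rule tendstoI)
    fix \<epsilon> :: real assume \<epsilon>: "0 < \<epsilon>"
    have "isCont (\<lambda>z. deriv (\<lambda>w. G w (snd z)) (fst z)) (u, v)"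
      using c2 by (simp add: continuous_on_eq_continuous_at)
    moreover have ep: "\<epsilon> / (\<bar>p\<bar> + 1) > 0" using \<epsilon> by (simp add: add_pos_nonneg)
    ultimately obtain \<delta> where \<delta>: "\<delta> > 0"
      and h\<delta>0: "\<forall>z. dist z (u, v) < \<delta> \<longrightarrow> dist (deriv (\<lambda>w. G w (snd z)) (fst z)) (deriv (\<lambda>w. G w (snd (u,v))) (fst (u,v))) < \<epsilon> / (\<bar>p\<bar> + 1)"
      unfolding continuous_at_eps_delta by blast
    have h\<delta>: "\<And>z. dist z (u, v) < \<delta> \<Longrightarrow> dist (deriv (\<lambda>w. G w (snd z)) (fst z)) c < \<epsilon> / (\<bar>p\<bar> + 1)"
      using h\<delta>0 by (simp add: c_def)
    show "\<forall>\<^sub>F h in at 0. dist ((D (0 + h) - D 0) / h) (p * c) < \<epsilon>"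
      unfolding eventually_at
    proof (intro exI[of _ "\<delta> / (\<bar>p\<bar> + \<bar>q\<bar> + 1)"] conjI ballI allI impI)
      show "0 < \<delta> / (\<bar>p\<bar> + \<bar>q\<bar> + 1)" using \<delta> by (simp add: add_pos_nonneg)
      fix h :: real assume h: "h \<noteq> 0 \<and> dist h 0 < \<delta> / (\<bar>p\<bar> + \<bar>q\<bar> + 1)"
      obtain \<xi> where \<xi>: "\<bar>\<xi> - u\<bar> \<le> \<bar>(u + h * p) - u\<bar>"
        "G (u + h * p) (v + h * q) - G u (v + h * q) = ((u + h * p) - u) * deriv (\<lambda>w. G w (v + h * q)) \<xi>"
        using mvt_any[OF dd2, of u "u + h * p" "v + h * q"] by blast
      have "dist (\<xi>, v + h * q) (u, v) \<le> \<bar>\<xi> - u\<bar> + \<bar>h * q\<bar>"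
        using norm_Pair_le[of "\<xi> - u" "h * q"] by (simp add: dist_norm)
      also have "\<dots> \<le> \<bar>h\<bar> * (\<bar>p\<bar> + \<bar>q\<bar>)" using \<xi>(1) by (simp add: abs_mult algebra_simps)
      also have "\<dots> < \<delta>"
      proof -
        have "\<bar>h\<bar> * (\<bar>p\<bar> + \<bar>q\<bar> + 1) < \<delta>" using h by (simp add: field_simps)
        moreover have "\<bar>h\<bar> * (\<bar>p\<bar> + \<bar>q\<bar>) \<le> \<bar>h\<bar> * (\<bar>p\<bar> + \<bar>q\<bar> + 1)" by (simp add: distrib_left)
        ultimately show ?thesis by linarith
      qed
      finally have "dist (deriv (\<lambda>w. G w (v + h * q)) \<xi>) c < \<epsilon> / (\<bar>p\<bar> + 1)"
        using h\<delta>[of "(\<xi>, v + h * q)"] by simp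
      then have lt: "\<bar>deriv (\<lambda>w. G w (v + h * q)) \<xi> - c\<bar> < \<epsilon> / (\<bar>p\<bar> + 1)" by (simp add: dist_norm)
      have "(D (0 + h) - D 0) / h = p * deriv (\<lambda>w. G w (v + h * q)) \<xi>"
        using \<xi>(2) h by (simp add: D_def)
      then have "dist ((D (0 + h) - D 0) / h) (p * c) = \<bar>p\<bar> * \<bar>deriv (\<lambda>w. G w (v + h * q)) \<xi> - c\<bar>"
        by (simp add: dist_norm abs_mult[symmetric] right_diff_distrib)
      also have "\<dots> \<le> \<bar>p\<bar> * (\<epsilon> / (\<bar>p\<bar> + 1))" using lt by (intro mult_left_mono) auto
      also have "\<dots> < \<epsilon>"
        using \<epsilon> by (simp add: field_simps)
      finally show "dist ((D (0 + h) - D 0) / h) (p * c) < \<epsilon>" .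
    qed
  qed
  have "((\<lambda>e. D e + G u (v + e * q)) has_real_derivative p * c + deriv (\<lambda>w. G u w) v * q) (at 0)"
    by (rule DERIV_add[OF part1 part2])
  then show ?thesis by (simp add: D_def c_def mult.commute)
qed

lemma line_deriv:
  fixes G :: "real \<Rightarrow> real \<Rightarrow> real"
  assumes d2: "\<And>u v. (\<lambda>w. G w v) differentiable (at u)"
    and d3: "\<And>u v. (\<lambda>w. G u w) differentiable (at v)"
    and c2: "continuous_on UNIV (\<lambda>z. deriv (\<lambda>w. G w (snd z)) (fst z))"
  shows "((\<lambda>e. G (u + e * p) (v + e * q)) has_real_derivative
            (p * deriv (\<lambda>w. G w (v + e0 * q)) (u + e0 * p) + q * deriv (\<lambda>w. G (u + e0 * p) w) (v + e0 * q))) (at e0)"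
proof -
  have "((\<lambda>e. G ((u + e0 * p) + e * p) ((v + e0 * q) + e * q)) has_real_derivative
            (p * deriv (\<lambda>w. G w (v + e0 * q)) (u + e0 * p) + q * deriv (\<lambda>w. G (u + e0 * p) w) (v + e0 * q))) (at 0)"
    by (rule line_deriv0[OF d2 d3 c2])
  then have "((\<lambda>e. (\<lambda>e. G (u + e * p) (v + e * q)) (e + e0)) has_real_derivative
            (p * deriv (\<lambda>w. G w (v + e0 * q)) (u + e0 * p) + q * deriv (\<lambda>w. G (u + e0 * p) w) (v + e0 * q))) (at 0)"
    by (simp add: algebra_simps)
  then show ?thesis using DERIV_shift[of _ _ 0 e0] by simp
qed



lemma CK_eq:
  assumes ab: "a < b" and t: "t \<in> {a..b}"
    and d: "\<And>\<tau>. \<tau> \<in> {a..b} \<Longrightarrow> (y has_vector_derivative y' \<tau>) (at \<tau> within {a..b})"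
  shows "caputo_kat a b \<alpha> \<rho> y t = kat_coef \<rho> \<alpha> * integral {a..t} (\<lambda>\<tau>. KK \<rho> \<alpha> t \<tau> * y' \<tau>)"
  unfolding caputo_kat_def KK_def
proof (intro arg_cong[where f="\<lambda>z. kat_coef \<rho> \<alpha> * z"] integral_cong)
  fix \<tau> assume "\<tau> \<in> {a..t}"
  then have "\<tau> \<in> {a..b}" using t by auto
  then show "(t powr \<rho> - \<tau> powr \<rho>) powr - \<alpha> * vector_derivative y (at \<tau> within {a..b}) =
         (t powr \<rho> - \<tau> powr \<rho>) powr - \<alpha> * y' \<tau>"
    using vector_derivative_within_closed_interval[OF ab _ d] by simp
qed

lemma CK_cont:
  assumes ab: "0 < a" "a < b" and \<rho>: "0 < \<rho>" and \<alpha>: "0 < \<alpha>" "\<alpha> < 1"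
    and yc: "continuous_on {a..b} y'"
    and d: "\<And>\<tau>. \<tau> \<in> {a..b} \<Longrightarrow> (y has_vector_derivative y' \<tau>) (at \<tau> within {a..b})"
  shows "continuous_on {a..b} (caputo_kat a b \<alpha> \<rho> y)"
proof -
  have "continuous_on {a..b} (\<lambda>t. kat_coef \<rho> \<alpha> * integral {a..t} (\<lambda>\<tau>. KK \<rho> \<alpha> t \<tau> * y' \<tau>))"
    using left_res(2)[OF ab(1) _ \<rho> \<alpha> yc] ab by (intro continuous_intros) auto
  then show ?thesis
    by (rule continuous_on_eq) (use CK_eq[OF ab(2) _ d] in auto)
qed

lemma CK_lin:
  assumes ab: "0 < a" "a < b" and \<rho>: "0 < \<rho>" and \<alpha>: "0 < \<alpha>" "\<alpha> < 1"
    and yc: "continuous_on {a..b} y'" and zc: "continuous_on {a..b} z'"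
    and dy: "\<And>\<tau>. \<tau> \<in> {a..b} \<Longrightarrow> (y has_vector_derivative y' \<tau>) (at \<tau> within {a..b})"
    and dz: "\<And>\<tau>. \<tau> \<in> {a..b} \<Longrightarrow> (z has_vector_derivative z' \<tau>) (at \<tau> within {a..b})"
    and t: "t \<in> {a..b}"
  shows "caputo_kat a b \<alpha> \<rho> (\<lambda>s. y s + e * z s) t = caputo_kat a b \<alpha> \<rho> y t + e * caputo_kat a b \<alpha> \<rho> z t"
proof -
  have d: "((\<lambda>s. y s + e * z s) has_vector_derivative (y' \<tau> + e * z' \<tau>)) (at \<tau> within {a..b})"
    if "\<tau> \<in> {a..b}" for \<tau>
    using dy[OF that] dz[OF that]
    by (auto simp: has_real_derivative_iff_has_vector_derivative[symmetric] intro!: derivative_eq_intros)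
  have iy: "(\<lambda>\<tau>. KK \<rho> \<alpha> t \<tau> * y' \<tau>) integrable_on {a..t}"
    using set_lebesgue_integral_eq_integral(1)[OF left_res(1)[OF ab(1) _ \<rho> \<alpha> yc t]] ab by simp
  have iz: "(\<lambda>\<tau>. KK \<rho> \<alpha> t \<tau> * z' \<tau>) integrable_on {a..t}"
    using set_lebesgue_integral_eq_integral(1)[OF left_res(1)[OF ab(1) _ \<rho> \<alpha> zc t]] ab by simp
  have "integral {a..t} (\<lambda>\<tau>. KK \<rho> \<alpha> t \<tau> * (y' \<tau> + e * z' \<tau>))
      = integral {a..t} (\<lambda>\<tau>. KK \<rho> \<alpha> t \<tau> * y' \<tau> + e * (KK \<rho> \<alpha> t \<tau> * z' \<tau>))"
    by (simp add: algebra_simps)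
  also have "\<dots> = integral {a..t} (\<lambda>\<tau>. KK \<rho> \<alpha> t \<tau> * y' \<tau>) + e * integral {a..t} (\<lambda>\<tau>. KK \<rho> \<alpha> t \<tau> * z' \<tau>)"
    using iy iz by (simp add: integral_add integrable_on_mult_right)
  finally show ?thesis
    using CK_eq[OF ab(2) t d] CK_eq[OF ab(2) t dy] CK_eq[OF ab(2) t dz]
    by (simp add: algebra_simps)
qed



theorem mainTheorem5:
  fixes a b A \<alpha> \<rho> xA xb :: real
    and L :: "real \<Rightarrow> real \<Rightarrow> real \<Rightarrow> real"
    and x :: "real \<Rightarrow> real"
  assumes ab: "0 < a" "a < b"
    and alpha: "0 < \<alpha>" "\<alpha> < 1"
    and rho: "0 < \<rho>"
    and A: "a < A" "A < b"
    and L_cont: "continuous_on ({a..b} \<times> UNIV) (\<lambda>(t, u, v). L t u v)"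
    and L_diff2: "\<And>t u v. t \<in> {a..b} \<Longrightarrow> (\<lambda>w. L t w v) differentiable (at u)"
    and L_diff3: "\<And>t u v. t \<in> {a..b} \<Longrightarrow> (\<lambda>w. L t u w) differentiable (at v)"
    and L2_cont: "continuous_on ({a..b} \<times> UNIV) (\<lambda>(t, u, v). part2 L t u v)"
    and L3_cont: "continuous_on ({a..b} \<times> UNIV) (\<lambda>(t, u, v). part3 L t u v)"
    and Db_ex: "\<And>y t. C1_on a b y \<Longrightarrow> t \<in> {a..b} \<Longrightarrow>
       (\<lambda>s. kat_int_right \<alpha> \<rho> b (\<lambda>\<tau>. part3 L \<tau> (y \<tau>) (caputo_kat a b \<alpha> \<rho> y \<tau>)) s)
         differentiable (at t within {a..b})"
    and Db_cont: "\<And>y. C1_on a b y \<Longrightarrow>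
       continuous_on {a..b}
         (kat_der_right a \<alpha> \<rho> b (\<lambda>\<tau>. part3 L \<tau> (y \<tau>) (caputo_kat a b \<alpha> \<rho> y \<tau>)))"
    and x_C1: "C1_on a b x"
    and x_bd: "x A = xA" "x b = xb"
    and locmin: "\<exists>\<epsilon>>0. \<forall>y. C1_on a b y \<and> y A = xA \<and> y b = xb \<and>
                    ck_norm a b \<alpha> \<rho> (\<lambda>t. y t - x t) < \<epsilon> \<longrightarrow>
                  integral {A..b} (\<lambda>t. L t (x t) (caputo_kat a b \<alpha> \<rho> x t))
                    \<le> integral {A..b} (\<lambda>t. L t (y t) (caputo_kat a b \<alpha> \<rho> y t))"
  shows "(\<forall>t\<in>{a..A}.
           kat_der_right a \<alpha> \<rho> A (\<lambda>\<tau>. part3 L \<tau> (x \<tau>) (caputo_kat a b \<alpha> \<rho> x \<tau>)) t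
         - kat_der_right a \<alpha> \<rho> b (\<lambda>\<tau>. part3 L \<tau> (x \<tau>) (caputo_kat a b \<alpha> \<rho> x \<tau>)) t = 0) \<and>
         (\<forall>t\<in>{A..b}.
           part2 L t (x t) (caputo_kat a b \<alpha> \<rho> x t)
         - kat_der_right a \<alpha> \<rho> b (\<lambda>\<tau>. part3 L \<tau> (x \<tau>) (caputo_kat a b \<alpha> \<rho> x \<tau>)) t = 0) \<and>
         kat_int_right \<alpha> \<rho> A (\<lambda>\<tau>. part3 L \<tau> (x \<tau>) (caputo_kat a b \<alpha> \<rho> x \<tau>)) a
         - kat_int_right \<alpha> \<rho> b (\<lambda>\<tau>. part3 L \<tau> (x \<tau>) (caputo_kat a b \<alpha> \<rho> x \<tau>)) a = 0"
proof -
  define c where "c = kat_coef \<rho> \<alpha>"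
  have g0: "Gamma (1 - \<alpha>) \<noteq> (0::real)"
    using Gamma_real_pos[of "1 - \<alpha>"] alpha by (metis diff_gt_0_iff_gt less_irrefl)
  have c0: "c \<noteq> 0" using rho g0 by (simp add: c_def kat_coef_def)
  have ab': "a \<le> b" "a \<le> A" "A \<le> b" using A by auto
  obtain x' where x'c: "continuous_on {a..b} x'"
    and x'd: "\<And>t. t \<in> {a..b} \<Longrightarrow> (x has_vector_derivative x' t) (at t within {a..b})"
    using x_C1 unfolding C1_on_def by blast
  have xc: "continuous_on {a..b} x"
    unfolding continuous_on_eq_continuous_within
    using x'd has_derivative_continuous unfolding has_vector_derivative_def by blast
  define v where "v = caputo_kat a b \<alpha> \<rho> x"
  have vc: "continuous_on {a..b} v" unfolding v_def by (rule CK_cont[OF ab rho alpha x'c x'd])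
  define \<Lambda> where "\<Lambda> = (\<lambda>\<tau>. part3 L \<tau> (x \<tau>) (v \<tau>))"
  define P2 where "P2 = (\<lambda>\<tau>. part2 L \<tau> (x \<tau>) (v \<tau>))"
  have comp: "continuous_on {a..b} (\<lambda>t. (t, x t, v t))" using xc vc by (intro continuous_intros)
  have compS: "(\<lambda>t. (t, x t, v t)) ` {a..b} \<subseteq> {a..b} \<times> UNIV" by auto
  have \<Lambda>c: "continuous_on {a..b} \<Lambda>"
    using continuous_on_compose2[OF L3_cont comp compS] by (simp add: \<Lambda>_def)
  have P2c: "continuous_on {a..b} P2"
    using continuous_on_compose2[OF L2_cont comp compS] by (simp add: P2_def)
  define Ib where "Ib = (\<lambda>\<tau>. integral {\<tau>..b} (\<lambda>t. KK \<rho> \<alpha> t \<tau> * \<Lambda> t))"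
  define IA where "IA = (\<lambda>\<tau>. integral {\<tau>..A} (\<lambda>t. KK \<rho> \<alpha> t \<tau> * \<Lambda> t))"
  have kir_b: "\<And>\<tau>. kat_int_right \<alpha> \<rho> b \<Lambda> \<tau> = c * Ib \<tau>"
    by (simp add: kat_int_right_def KK_def Ib_def c_def)
  have kir_A: "\<And>\<tau>. kat_int_right \<alpha> \<rho> A \<Lambda> \<tau> = c * IA \<tau>"
    by (simp add: kat_int_right_def KK_def IA_def c_def)
  have Ibc: "continuous_on {a..b} Ib"
    unfolding Ib_def using right_res(2)[OF ab(1) ab'(1) rho alpha \<Lambda>c] .
  have \<Lambda>cA: "continuous_on {a..A} \<Lambda>" using \<Lambda>c by (rule continuous_on_subset) (use A in auto)
  have IAc: "continuous_on {a..A} IA"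
    unfolding IA_def using right_res(2)[OF ab(1) ab'(2) rho alpha \<Lambda>cA] .
  define Gf where "Gf = (\<lambda>\<tau>. Ib \<tau> - (if \<tau> \<le> A then IA \<tau> else 0))"
  have FV: "integral {A..b} (\<lambda>t. \<eta> t * P2 t) + c * integral {a..b} (\<lambda>\<tau>. \<eta>' \<tau> * Gf \<tau>) = 0"
    if \<eta>'c: "continuous_on {a..b} \<eta>'"
      and \<eta>d: "\<And>t. t \<in> {a..b} \<Longrightarrow> (\<eta> has_vector_derivative \<eta>' t) (at t within {a..b})"
      and \<eta>A: "\<eta> A = 0" and \<eta>b: "\<eta> b = 0" for \<eta> \<eta>'
  proof -
    have \<eta>c: "continuous_on {a..b} \<eta>"
      unfolding continuous_on_eq_continuous_within
      using \<eta>d has_derivative_continuous unfolding has_vector_derivative_def by blast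
    define w where "w = caputo_kat a b \<alpha> \<rho> \<eta>"
    have wc: "continuous_on {a..b} w" unfolding w_def by (rule CK_cont[OF ab rho alpha \<eta>'c \<eta>d])
    have CKy: "caputo_kat a b \<alpha> \<rho> (\<lambda>s. x s + e * \<eta> s) t = v t + e * w t" if "t \<in> {a..b}" for e t
      using CK_lin[OF ab rho alpha x'c \<eta>'c x'd \<eta>d that] by (simp add: v_def w_def)
    have CKs: "caputo_kat a b \<alpha> \<rho> (\<lambda>s. e * \<eta> s) t = e * w t" if t: "t \<in> {a..b}" for e t
    proof -
      have d: "((\<lambda>s. e * \<eta> s) has_vector_derivative (e * \<eta>' \<tau>)) (at \<tau> within {a..b})"
        if "\<tau> \<in> {a..b}" for \<tau>
        using \<eta>d[OF that]
        by (auto simp: has_real_derivative_iff_has_vector_derivative[symmetric] intro!: derivative_eq_intros)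
      have "integral {a..t} (\<lambda>\<tau>. KK \<rho> \<alpha> t \<tau> * (e * \<eta>' \<tau>)) = e * integral {a..t} (\<lambda>\<tau>. KK \<rho> \<alpha> t \<tau> * \<eta>' \<tau>)"
        by (simp add: mult.left_commute[of _ e])
      then show ?thesis
        using CK_eq[OF ab(2) t d] CK_eq[OF ab(2) t \<eta>d] by (simp add: w_def)
    qed
    obtain B\<eta> where B\<eta>: "\<And>t. t \<in> {a..b} \<Longrightarrow> \<bar>\<eta> t\<bar> \<le> B\<eta>" using cont_bound[OF \<eta>c] by blast
    obtain Bw where Bw: "\<And>t. t \<in> {a..b} \<Longrightarrow> \<bar>w t\<bar> \<le> Bw" using cont_bound[OF wc] by blast
    have B0: "0 \<le> B\<eta>" "0 \<le> Bw" using B\<eta>[of a] Bw[of a] ab by auto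
    obtain \<epsilon>0 where \<epsilon>0: "\<epsilon>0 > 0" and lm: "\<And>y. C1_on a b y \<and> y A = xA \<and> y b = xb \<and>
                    ck_norm a b \<alpha> \<rho> (\<lambda>t. y t - x t) < \<epsilon>0 \<Longrightarrow>
                  integral {A..b} (\<lambda>t. L t (x t) (caputo_kat a b \<alpha> \<rho> x t))
                    \<le> integral {A..b} (\<lambda>t. L t (y t) (caputo_kat a b \<alpha> \<rho> y t))"
      using locmin by blast
    define \<delta> where "\<delta> = \<epsilon>0 / (B\<eta> + Bw + 1)"
    have \<delta>: "\<delta> > 0" using \<epsilon>0 B0 by (simp add: \<delta>_def)
    define \<phi> where "\<phi> = (\<lambda>e. integral {A..b} (\<lambda>t. L t (x t + e * \<eta> t) (v t + e * w t)))"
    have mn: "\<phi> 0 \<le> \<phi> e" if e: "\<bar>0 - e\<bar> < \<delta>" for e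
    proof -
      define y where "y = (\<lambda>s. x s + e * \<eta> s)"
      have yd: "(y has_vector_derivative (x' \<tau> + e * \<eta>' \<tau>)) (at \<tau> within {a..b})"
        if "\<tau> \<in> {a..b}" for \<tau>
        using x'd[OF that] \<eta>d[OF that] unfolding y_def
        by (auto simp: has_real_derivative_iff_has_vector_derivative[symmetric] intro!: derivative_eq_intros)
      have yC1: "C1_on a b y"
        unfolding C1_on_def
        by (rule exI[of _ "\<lambda>\<tau>. x' \<tau> + e * \<eta>' \<tau>"]) (use yd x'c \<eta>'c in \<open>auto intro!: continuous_intros\<close>)
      have yA: "y A = xA" "y b = xb" using x_bd \<eta>A \<eta>b by (auto simp: y_def)
      have diff: "(\<lambda>t. y t - x t) = (\<lambda>t. e * \<eta> t)" by (simp add: y_def)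
      have n1: "(SUP t\<in>{a..b}. \<bar>e * \<eta> t\<bar>) \<le> \<bar>e\<bar> * B\<eta>"
      proof (rule cSUP_least)
        show "{a..b} \<noteq> {}" using ab by simp
        fix t assume "t \<in> {a..b}"
        then show "\<bar>e * \<eta> t\<bar> \<le> \<bar>e\<bar> * B\<eta>" by (simp add: abs_mult mult_left_mono B\<eta>)
      qed
      have n2: "(SUP t\<in>{a..b}. \<bar>caputo_kat a b \<alpha> \<rho> (\<lambda>t. e * \<eta> t) t\<bar>) \<le> \<bar>e\<bar> * Bw"
      proof (rule cSUP_least)
        show "{a..b} \<noteq> {}" using ab by simp
        fix t assume "t \<in> {a..b}"
        then show "\<bar>caputo_kat a b \<alpha> \<rho> (\<lambda>t. e * \<eta> t) t\<bar> \<le> \<bar>e\<bar> * Bw" by (simp add: CKs abs_mult mult_left_mono Bw)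
      qed
      have "ck_norm a b \<alpha> \<rho> (\<lambda>t. y t - x t) \<le> \<bar>e\<bar> * (B\<eta> + Bw)"
        unfolding diff ck_norm_def using n1 n2 by (simp add: distrib_left)
      also have "\<dots> \<le> \<bar>e\<bar> * (B\<eta> + Bw + 1)" by (simp add: distrib_left)
      also have "\<dots> < \<delta> * (B\<eta> + Bw + 1)"
        using e B0 by (intro mult_strict_right_mono) auto
      also have "\<dots> = \<epsilon>0" using B0 by (simp add: \<delta>_def)
      finally have "ck_norm a b \<alpha> \<rho> (\<lambda>t. y t - x t) < \<epsilon>0" .
      then have J: "integral {A..b} (\<lambda>t. L t (x t) (caputo_kat a b \<alpha> \<rho> x t))
                    \<le> integral {A..b} (\<lambda>t. L t (y t) (caputo_kat a b \<alpha> \<rho> y t))"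
        using lm yC1 yA by blast
      have "\<phi> 0 = integral {A..b} (\<lambda>t. L t (x t) (caputo_kat a b \<alpha> \<rho> x t))"
        by (simp add: \<phi>_def v_def)
      moreover have "\<phi> e = integral {A..b} (\<lambda>t. L t (y t) (caputo_kat a b \<alpha> \<rho> y t))"
        unfolding \<phi>_def by (rule integral_cong) (use A in \<open>auto simp: y_def CKy\<close>)
      ultimately show ?thesis using J by simp
    qed
    define f2 where "f2 = (\<lambda>e t. \<eta> t * part2 L t (x t + e * \<eta> t) (v t + e * w t) + w t * part3 L t (x t + e * \<eta> t) (v t + e * w t))"
    have ecb: "cbox A b = {A..b}" by simp
    have xcA: "continuous_on {A..b} x" by (rule continuous_on_subset[OF xc]) (use A in auto)
    have vcA: "continuous_on {A..b} v" by (rule continuous_on_subset[OF vc]) (use A in auto)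
    have \<eta>cA: "continuous_on {A..b} \<eta>" by (rule continuous_on_subset[OF \<eta>c]) (use A in auto)
    have wcA: "continuous_on {A..b} w" by (rule continuous_on_subset[OF wc]) (use A in auto)
    have fx: "((\<lambda>e. L t (x t + e * \<eta> t) (v t + e * w t)) has_field_derivative f2 e t) (at e within UNIV)"
      if "e \<in> UNIV" "t \<in> cbox A b" for e t
    proof -
      have t: "t \<in> {a..b}" using that(2) A by auto
      have c2: "continuous_on UNIV (\<lambda>z. deriv (\<lambda>w. L t w (snd z)) (fst z))"
      proof -
        have h1: "continuous_on UNIV (\<lambda>z::real\<times>real. (t, fst z, snd z))" by (intro continuous_intros)
        have h2: "(\<lambda>z::real\<times>real. (t, fst z, snd z)) ` UNIV \<subseteq> {a..b} \<times> UNIV" using t by auto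
        have "continuous_on UNIV (\<lambda>z. (\<lambda>(t, u, v). part2 L t u v) ((\<lambda>z::real\<times>real. (t, fst z, snd z)) z))"
          by (rule continuous_on_compose2[OF L2_cont h1 h2])
        then show ?thesis by (simp add: part2_def case_prod_beta)
      qed
      show ?thesis
        using line_deriv[OF L_diff2[OF t] L_diff3[OF t] c2, of "x t" "\<eta> t" "v t" "w t" e]
        by (simp add: f2_def part2_def part3_def)
    qed
    have fint: "(\<lambda>t. L t (x t + e * \<eta> t) (v t + e * w t)) integrable_on cbox A b" if "e \<in> UNIV" for e
    proof -
      have h1: "continuous_on {A..b} (\<lambda>t. (t, x t + e * \<eta> t, v t + e * w t))"
        using xcA vcA \<eta>cA wcA by (intro continuous_intros)
      have h2: "(\<lambda>t. (t, x t + e * \<eta> t, v t + e * w t)) ` {A..b} \<subseteq> {a..b} \<times> UNIV" using A by auto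
      have "continuous_on {A..b} (\<lambda>t. (\<lambda>(t, u, v). L t u v) ((\<lambda>t. (t, x t + e * \<eta> t, v t + e * w t)) t))"
        by (rule continuous_on_compose2[OF L_cont h1 h2])
      then have "continuous_on {A..b} (\<lambda>t. L t (x t + e * \<eta> t) (v t + e * w t))" by simp
      then show ?thesis unfolding ecb by (rule integrable_continuous_real)
    qed
    have sndc: "continuous_on (UNIV \<times> {A..b}) (\<lambda>z. h (snd z))" if "continuous_on {A..b} h" for h :: "real \<Rightarrow> real"
      by (rule continuous_on_compose2[OF that]) (auto intro!: continuous_intros)
    have cfx: "continuous_on (UNIV \<times> cbox A b) (\<lambda>(e, t). f2 e t)"
    proof -
      have cz: "continuous_on (UNIV \<times> {A..b}) (\<lambda>z. (snd z, x (snd z) + fst z * \<eta> (snd z), v (snd z) + fst z * w (snd z)))"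
        using sndc[OF xcA] sndc[OF vcA] sndc[OF \<eta>cA] sndc[OF wcA] by (intro continuous_intros)
      have zS: "(\<lambda>z. (snd z, x (snd z) + fst z * \<eta> (snd z), v (snd z) + fst z * w (snd z))) ` (UNIV \<times> {A..b}) \<subseteq> {a..b} \<times> UNIV"
        using A by auto
      have "continuous_on (UNIV \<times> {A..b}) (\<lambda>z. f2 (fst z) (snd z))"
        unfolding f2_def
        using continuous_on_compose2[OF L2_cont cz zS] continuous_on_compose2[OF L3_cont cz zS]
          sndc[OF \<eta>cA] sndc[OF wcA]
        by (intro continuous_on_add continuous_on_mult) simp_all
      then show ?thesis unfolding ecb by (simp add: case_prod_beta')
    qed
    have der0: "((\<lambda>e. integral (cbox A b) (\<lambda>t. L t (x t + e * \<eta> t) (v t + e * w t))) has_field_derivative integral (cbox A b) (f2 0)) (at 0 within UNIV)"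
      by (rule leibniz_rule_field_derivative[OF fx fint cfx]) auto
    have der: "(\<phi> has_field_derivative integral {A..b} (f2 0)) (at 0)"
      using der0 unfolding ecb \<phi>_def by simp
    have "integral {A..b} (f2 0) = 0"
      by (rule DERIV_local_min[OF der \<delta>]) (use mn in auto)
    then have z: "integral {A..b} (\<lambda>t. \<eta> t * P2 t + w t * \<Lambda> t) = 0"
      by (simp add: f2_def P2_def \<Lambda>_def)
    have i1: "(\<lambda>t. \<eta> t * P2 t) integrable_on {A..b}" "(\<lambda>t. w t * \<Lambda> t) integrable_on {A..b}"
      using \<eta>cA wcA P2c \<Lambda>c A
      by (auto intro!: integrable_continuous_real continuous_intros elim: continuous_on_subset)
    have split: "integral {max A \<tau>..b} (\<lambda>t. KK \<rho> \<alpha> t \<tau> * \<Lambda> t) = Gf \<tau>" if \<tau>: "\<tau> \<in> {a..b}" for \<tau>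
    proof (cases "\<tau> \<le> A")
      case True
      have "(\<lambda>t. KK \<rho> \<alpha> t \<tau> * \<Lambda> t) integrable_on {\<tau>..b}"
        using set_lebesgue_integral_eq_integral(1)[OF right_res(1)[OF ab(1) ab'(1) rho alpha \<Lambda>c \<tau>]] .
      then have "integral {\<tau>..A} (\<lambda>t. KK \<rho> \<alpha> t \<tau> * \<Lambda> t) + integral {A..b} (\<lambda>t. KK \<rho> \<alpha> t \<tau> * \<Lambda> t)
          = integral {\<tau>..b} (\<lambda>t. KK \<rho> \<alpha> t \<tau> * \<Lambda> t)"
        using True A by (intro Henstock_Kurzweil_Integration.integral_combine) auto
      then show ?thesis using True by (simp add: Gf_def Ib_def IA_def max_def)
    next
      case False
      then show ?thesis by (simp add: Gf_def Ib_def max_def)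
    qed
    have "integral {A..b} (\<lambda>t. w t * \<Lambda> t) = integral {A..b} (\<lambda>t. c * (\<Lambda> t * integral {a..t} (\<lambda>\<tau>. KK \<rho> \<alpha> t \<tau> * \<eta>' \<tau>)))"
    proof (rule integral_cong)
      fix t assume "t \<in> {A..b}"
      then have tb: "t \<in> {a..b}" using A by auto
      show "w t * \<Lambda> t = c * (\<Lambda> t * integral {a..t} (\<lambda>\<tau>. KK \<rho> \<alpha> t \<tau> * \<eta>' \<tau>))"
        using CK_eq[OF ab(2) tb \<eta>d, where \<alpha>=\<alpha> and \<rho>=\<rho>] unfolding w_def c_def by simp
    qed
    also have "\<dots> = c * integral {A..b} (\<lambda>t. \<Lambda> t * integral {a..t} (\<lambda>\<tau>. KK \<rho> \<alpha> t \<tau> * \<eta>' \<tau>))"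
      by simp
    also have "\<dots> = c * integral {a..b} (\<lambda>\<tau>. \<eta>' \<tau> * integral {max A \<tau>..b} (\<lambda>t. KK \<rho> \<alpha> t \<tau> * \<Lambda> t))"
      by (simp add: fubini_tri[OF ab(1) ab'(2) ab'(3) rho alpha \<Lambda>c \<eta>'c])
    also have "\<dots> = c * integral {a..b} (\<lambda>\<tau>. \<eta>' \<tau> * Gf \<tau>)"
    proof -
      have "integral {a..b} (\<lambda>\<tau>. \<eta>' \<tau> * integral {max A \<tau>..b} (\<lambda>t. KK \<rho> \<alpha> t \<tau> * \<Lambda> t))
          = integral {a..b} (\<lambda>\<tau>. \<eta>' \<tau> * Gf \<tau>)"
        by (rule integral_cong) (simp add: split)
      then show ?thesis by simp
    qed
    finally have "integral {A..b} (\<lambda>t. w t * \<Lambda> t) = c * integral {a..b} (\<lambda>\<tau>. \<eta>' \<tau> * Gf \<tau>)" .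
    then show ?thesis using z i1 by (simp add: integral_add)
  qed
  have Left: "\<And>\<tau>. \<tau> \<in> {a..A} \<Longrightarrow> Ib \<tau> = IA \<tau>"
  proof -
    define \<psi> where "\<psi> = (\<lambda>\<tau>. (A - min \<tau> A) * (Ib (min \<tau> A) - IA (min \<tau> A)))"
    define H where "H = (\<lambda>\<tau>. (A - min \<tau> A) * (Ib (min \<tau> A) - IA (min \<tau> A))^2)"
    have minc: "continuous_on {a..b} (\<lambda>\<tau>. min \<tau> A)" by (intro continuous_intros)
    have minS: "(\<lambda>\<tau>. min \<tau> A) ` {a..b} \<subseteq> {a..A}" using A by auto
    have minS': "(\<lambda>\<tau>. min \<tau> A) ` {a..b} \<subseteq> {a..b}" using A by auto
    have Ibm: "continuous_on {a..b} (\<lambda>\<tau>. Ib (min \<tau> A))" by (rule continuous_on_compose2[OF Ibc minc minS'])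
    have IAm: "continuous_on {a..b} (\<lambda>\<tau>. IA (min \<tau> A))" by (rule continuous_on_compose2[OF IAc minc minS])
    have \<psi>c: "continuous_on {a..b} \<psi>" unfolding \<psi>_def using Ibm IAm by (intro continuous_intros)
    have Hc: "continuous_on {a..b} H" unfolding H_def using Ibm IAm by (intro continuous_intros)
    define \<eta> where "\<eta> = (\<lambda>t. integral {a..t} \<psi> - integral {a..A} \<psi>)"
    have \<eta>d: "(\<eta> has_vector_derivative \<psi> t) (at t within {a..b})" if "t \<in> {a..b}" for t
      unfolding \<eta>_def using integral_has_vector_derivative[OF \<psi>c that]
      by (auto intro!: derivative_eq_intros)
    have \<psi>0: "\<psi> \<tau> = 0" if "\<tau> \<ge> A" for \<tau> using that by (simp add: \<psi>_def)
    have \<eta>0: "\<eta> t = 0" if "t \<in> {A..b}" for t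
    proof -
      have "integral {a..A} \<psi> + integral {A..t} \<psi> = integral {a..t} \<psi>"
        using that A \<psi>c
        by (intro Henstock_Kurzweil_Integration.integral_combine integrable_continuous_real)
           (auto elim: continuous_on_subset)
      moreover have "integral {A..t} \<psi> = 0"
        by (subst integral_cong[where g="\<lambda>_. 0"]) (auto simp: \<psi>0)
      ultimately show ?thesis by (simp add: \<eta>_def)
    qed
    have "integral {A..b} (\<lambda>t. \<eta> t * P2 t) + c * integral {a..b} (\<lambda>\<tau>. \<psi> \<tau> * Gf \<tau>) = 0"
      by (rule FV[OF \<psi>c \<eta>d]) (use \<eta>0 A in auto)
    moreover have "integral {A..b} (\<lambda>t. \<eta> t * P2 t) = 0"
      by (subst integral_cong[where g="\<lambda>_. 0"]) (auto simp: \<eta>0)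
    ultimately have "integral {a..b} (\<lambda>\<tau>. \<psi> \<tau> * Gf \<tau>) = 0" using c0 by simp
    moreover have "integral {a..b} (\<lambda>\<tau>. \<psi> \<tau> * Gf \<tau>) = integral {a..b} H"
      by (rule integral_cong) (auto simp: \<psi>_def H_def Gf_def power2_eq_square)
    ultimately have "(H has_integral 0) {a..b}"
      using integrable_continuous_real[OF Hc] by (metis has_integral_integrable_integral)
    then have H0: "H \<tau> = 0" if "\<tau> \<in> {a..b}" for \<tau>
      using has_integral_0_cbox_imp_0[of a b H \<tau>] Hc that ab
      by (auto simp: H_def)
    define D where "D = (\<lambda>\<tau>. Ib \<tau> - IA \<tau>)"
    have Dc: "continuous_on {a..A} D"
    proof -
      have "continuous_on {a..A} Ib" by (rule continuous_on_subset[OF Ibc]) (use A in auto)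
      then show ?thesis unfolding D_def using IAc by (intro continuous_intros)
    qed
    have cl: "closed {\<tau> \<in> {a..A}. D \<tau> = 0}"
      by (rule continuous_closed_preimage_constant[OF Dc]) simp
    have sub: "{a..<A} \<subseteq> {\<tau> \<in> {a..A}. D \<tau> = 0}"
    proof
      fix \<tau> assume \<tau>: "\<tau> \<in> {a..<A}"
      then have "H \<tau> = 0" using H0 A by auto
      then have "(A - \<tau>) * (Ib \<tau> - IA \<tau>)^2 = 0" using \<tau> by (simp add: H_def)
      then show "\<tau> \<in> {\<tau> \<in> {a..A}. D \<tau> = 0}" using \<tau> by (auto simp: D_def)
    qed
    have "{a..A} \<subseteq> {\<tau> \<in> {a..A}. D \<tau> = 0}"
      using closure_minimal[OF sub cl] A by simp
    then show "\<And>\<tau>. \<tau> \<in> {a..A} \<Longrightarrow> Ib \<tau> = IA \<tau>" by (auto simp: D_def)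
  qed
  have Ibd: "((\<lambda>s. c * Ib s) has_vector_derivative vector_derivative (\<lambda>s. c * Ib s) (at t within {a..b})) (at t within {a..b})"
    if "t \<in> {a..b}" for t
  proof -
    have "(\<lambda>s. kat_int_right \<alpha> \<rho> b \<Lambda> s) differentiable (at t within {a..b})"
      using Db_ex[OF x_C1 that] by (simp add: \<Lambda>_def v_def)
    then show ?thesis by (simp add: kir_b vector_derivative_works)
  qed
  have Right: "\<And>t. t \<in> {A..b} \<Longrightarrow> P2 t - vector_derivative (\<lambda>s. c * Ib s) (at t within {a..b}) = 0"
  proof -
    define DD where "DD = (\<lambda>t. vector_derivative (\<lambda>s. c * Ib s) (at t within {a..b}))"
    have P2cA: "continuous_on {A..b} P2" by (rule continuous_on_subset[OF P2c]) (use A in auto)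
    have IbcA: "continuous_on {A..b} Ib" by (rule continuous_on_subset[OF Ibc]) (use A in auto)
    define Pint where "Pint = (\<lambda>t. integral {A..t} P2)"
    have Pintd: "(Pint has_vector_derivative P2 t) (at t within {A..b})" if "t \<in> {A..b}" for t
      unfolding Pint_def by (rule integral_has_vector_derivative[OF P2cA that])
    have Pintc: "continuous_on {A..b} Pint"
      unfolding continuous_on_eq_continuous_within
      using Pintd has_derivative_continuous unfolding has_vector_derivative_def by blast
    define Q where "Q = (\<lambda>t. c * Ib t - Pint t)"
    have Qc: "continuous_on {A..b} Q" unfolding Q_def using IbcA Pintc by (intro continuous_intros)
    define \<kappa> where "\<kappa> = integral {A..b} Q / (b - A)"
    define \<phi> where "\<phi> = (\<lambda>\<tau>. Q (max \<tau> A) - \<kappa>)"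
    have maxc: "continuous_on {a..b} (\<lambda>\<tau>. max \<tau> A)" by (intro continuous_intros)
    have maxS: "(\<lambda>\<tau>. max \<tau> A) ` {a..b} \<subseteq> {A..b}" using A by auto
    have \<phi>c: "continuous_on {a..b} \<phi>"
      unfolding \<phi>_def using continuous_on_compose2[OF Qc maxc maxS] by (intro continuous_intros)
    have \<phi>cA: "continuous_on {A..b} \<phi>" by (rule continuous_on_subset[OF \<phi>c]) (use A in auto)
    have \<phi>Q: "\<phi> \<tau> = Q \<tau> - \<kappa>" if "\<tau> \<in> {A..b}" for \<tau> using that by (simp add: \<phi>_def)
    define \<eta> where "\<eta> = (\<lambda>t. integral {a..t} \<phi> - integral {a..A} \<phi>)"
    have \<eta>d: "(\<eta> has_vector_derivative \<phi> t) (at t within {a..b})" if "t \<in> {a..b}" for t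
      unfolding \<eta>_def using integral_has_vector_derivative[OF \<phi>c that]
      by (auto intro!: derivative_eq_intros)
    have \<eta>int: "\<eta> t = integral {A..t} \<phi>" if "t \<in> {A..b}" for t
    proof -
      have "integral {a..A} \<phi> + integral {A..t} \<phi> = integral {a..t} \<phi>"
        using that A \<phi>c
        by (intro Henstock_Kurzweil_Integration.integral_combine integrable_continuous_real)
           (auto elim: continuous_on_subset)
      then show ?thesis by (simp add: \<eta>_def)
    qed
    have int\<phi>: "integral {A..b} \<phi> = 0"
    proof -
      have "integral {A..b} \<phi> = integral {A..b} (\<lambda>\<tau>. Q \<tau> - \<kappa>)"
        by (rule integral_cong) (simp add: \<phi>Q)
      also have "\<dots> = integral {A..b} Q - \<kappa> * (b - A)"
        using integrable_continuous_real[OF Qc] A by (subst integral_diff) (auto simp: mult.commute)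
      also have "\<dots> = 0" using A by (simp add: \<kappa>_def)
      finally show ?thesis .
    qed
    have \<eta>A: "\<eta> A = 0" using \<eta>int[of A] A by simp
    have \<eta>b: "\<eta> b = 0" using \<eta>int[of b] A int\<phi> by simp
    have FV1: "integral {A..b} (\<lambda>t. \<eta> t * P2 t) + c * integral {a..b} (\<lambda>\<tau>. \<phi> \<tau> * Gf \<tau>) = 0"
      by (rule FV[OF \<phi>c \<eta>d \<eta>A \<eta>b])
    have IbA: "Ib A = 0" using Left[of A] A by (simp add: IA_def)
    have Gfm: "Gf \<tau> = Ib (max \<tau> A)" if "\<tau> \<in> {a..b}" for \<tau>
      using that Left[of \<tau>] IbA by (auto simp: Gf_def max_def)
    have Ibm: "continuous_on {a..b} (\<lambda>\<tau>. Ib (max \<tau> A))" using continuous_on_compose2[OF IbcA maxc maxS] .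
    have "integral {a..b} (\<lambda>\<tau>. \<phi> \<tau> * Gf \<tau>) = integral {a..b} (\<lambda>\<tau>. \<phi> \<tau> * Ib (max \<tau> A))"
      by (rule integral_cong) (simp add: Gfm)
    also have "\<dots> = integral {a..A} (\<lambda>\<tau>. \<phi> \<tau> * Ib (max \<tau> A)) + integral {A..b} (\<lambda>\<tau>. \<phi> \<tau> * Ib (max \<tau> A))"
      using A \<phi>c Ibm
      by (intro Henstock_Kurzweil_Integration.integral_combine[symmetric] integrable_continuous_real continuous_intros) auto
    also have "integral {a..A} (\<lambda>\<tau>. \<phi> \<tau> * Ib (max \<tau> A)) = 0"
      by (subst integral_cong[where g="\<lambda>_. 0"]) (auto simp: IbA max_def)
    also have "integral {A..b} (\<lambda>\<tau>. \<phi> \<tau> * Ib (max \<tau> A)) = integral {A..b} (\<lambda>\<tau>. \<phi> \<tau> * Ib \<tau>)"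
      by (rule integral_cong) simp
    finally have e1: "integral {A..b} (\<lambda>t. \<eta> t * P2 t) + c * integral {A..b} (\<lambda>\<tau>. \<phi> \<tau> * Ib \<tau>) = 0"
      using FV1 by simp
    have \<eta>dA: "(\<eta> has_vector_derivative \<phi> t) (at t within {A..b})" if "t \<in> {A..b}" for t
      by (rule has_vector_derivative_within_subset[OF \<eta>d]) (use that A in auto)
    have \<eta>cA: "continuous_on {A..b} \<eta>"
      unfolding continuous_on_eq_continuous_within
      using \<eta>dA has_derivative_continuous unfolding has_vector_derivative_def by blast
    have "((\<lambda>t. \<phi> t * Pint t + \<eta> t * P2 t) has_integral (\<eta> b * Pint b - \<eta> A * Pint A)) {A..b}"
    proof (rule fundamental_theorem_of_calculus)
      show "A \<le> b" using A by simp
      fix t assume t: "t \<in> {A..b}"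
      have "((\<lambda>t. \<eta> t * Pint t) has_real_derivative (\<eta> t * P2 t + \<phi> t * Pint t)) (at t within {A..b})"
        using \<eta>dA[OF t] Pintd[OF t]
        by (auto simp: has_real_derivative_iff_has_vector_derivative[symmetric] intro!: derivative_eq_intros)
      then show "((\<lambda>t. \<eta> t * Pint t) has_vector_derivative (\<phi> t * Pint t + \<eta> t * P2 t)) (at t within {A..b})"
        by (simp add: has_real_derivative_iff_has_vector_derivative add.commute)
    qed
    then have "integral {A..b} (\<lambda>t. \<phi> t * Pint t + \<eta> t * P2 t) = 0"
      using \<eta>A \<eta>b by (simp add: integral_unique)
    moreover have "(\<lambda>t. \<phi> t * Pint t) integrable_on {A..b}" "(\<lambda>t. \<eta> t * P2 t) integrable_on {A..b}"
      using \<phi>cA Pintc \<eta>cA P2cA by (auto intro!: integrable_continuous_real continuous_intros)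
    ultimately have e2: "integral {A..b} (\<lambda>t. \<phi> t * Pint t) + integral {A..b} (\<lambda>t. \<eta> t * P2 t) = 0"
      by (simp add: integral_add)
    have "integral {A..b} (\<lambda>t. \<phi> t * Q t) = c * integral {A..b} (\<lambda>\<tau>. \<phi> \<tau> * Ib \<tau>) - integral {A..b} (\<lambda>t. \<phi> t * Pint t)"
    proof -
      have "integral {A..b} (\<lambda>t. \<phi> t * Q t) = integral {A..b} (\<lambda>t. c * (\<phi> t * Ib t) - \<phi> t * Pint t)"
        by (simp add: Q_def algebra_simps)
      also have "\<dots> = integral {A..b} (\<lambda>t. c * (\<phi> t * Ib t)) - integral {A..b} (\<lambda>t. \<phi> t * Pint t)"
        using integrable_continuous_real[of A b "\<lambda>t. c * (\<phi> t * Ib t)"] integrable_continuous_real[of A b "\<lambda>t. \<phi> t * Pint t"]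
          \<phi>cA Pintc IbcA
        by (simp add: integral_diff continuous_intros)
      finally show ?thesis by simp
    qed
    then have "integral {A..b} (\<lambda>t. \<phi> t * Q t) = 0" using e1 e2 by simp
    moreover have "integral {A..b} (\<lambda>t. (\<phi> t)^2) = integral {A..b} (\<lambda>t. \<phi> t * Q t) - \<kappa> * integral {A..b} \<phi>"
    proof -
      have "integral {A..b} (\<lambda>t. (\<phi> t)^2) = integral {A..b} (\<lambda>t. \<phi> t * Q t - \<kappa> * \<phi> t)"
        by (rule integral_cong) (simp add: \<phi>Q power2_eq_square algebra_simps)
      also have "\<dots> = integral {A..b} (\<lambda>t. \<phi> t * Q t) - \<kappa> * integral {A..b} \<phi>"
        using integrable_continuous_real[of A b "\<lambda>t. \<phi> t * Q t"] integrable_continuous_real[OF \<phi>cA]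
          \<phi>cA Qc
        by (subst integral_diff) (auto intro: integrable_on_mult_right continuous_intros)
      finally show ?thesis .
    qed
    ultimately have "integral {A..b} (\<lambda>t. (\<phi> t)^2) = 0" using int\<phi> by simp
    moreover have sqc: "continuous_on {A..b} (\<lambda>t. (\<phi> t)^2)" using \<phi>cA by (intro continuous_intros)
    ultimately have "((\<lambda>t. (\<phi> t)^2) has_integral 0) {A..b}"
      using integrable_continuous_real[OF sqc] by (metis has_integral_integrable_integral)
    then have \<phi>0: "(\<phi> \<tau>)^2 = 0" if "\<tau> \<in> {A..b}" for \<tau>
      using has_integral_0_cbox_imp_0[of A b "\<lambda>t. (\<phi> t)^2" \<tau>] sqc that A by auto
    have Qk: "Q \<tau> = \<kappa>" if "\<tau> \<in> {A..b}" for \<tau> using \<phi>0[OF that] \<phi>Q[OF that] by simp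
    fix t assume t: "t \<in> {A..b}"
    have tb: "t \<in> {a..b}" using t A by auto
    have d1: "(Q has_vector_derivative (DD t - P2 t)) (at t within {A..b})"
    proof -
      have "((\<lambda>s. c * Ib s) has_vector_derivative DD t) (at t within {A..b})"
        unfolding DD_def by (rule has_vector_derivative_within_subset[OF Ibd[OF tb]]) (use A in auto)
      then show ?thesis unfolding Q_def using Pintd[OF t] by (intro has_vector_derivative_diff)
    qed
    have d2: "(Q has_vector_derivative 0) (at t within {A..b})"
      by (rule has_vector_derivative_transform[OF t, where f="\<lambda>_. \<kappa>"]) (auto simp: Qk)
    have "DD t - P2 t = 0"
    proof -
      have e: "cbox A b = {A..b}" by simp
      show ?thesis
        using vector_derivative_unique_within_closed_interval[of A b t Q, OF _ _ d1[folded e] d2[folded e]] t A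
        by auto
    qed
    then show "P2 t - vector_derivative (\<lambda>s. c * Ib s) (at t within {a..b}) = 0" by (simp add: DD_def)
  qed
  have C1: "\<forall>t\<in>{a..A}. kat_der_right a \<alpha> \<rho> A \<Lambda> t - kat_der_right a \<alpha> \<rho> b \<Lambda> t = 0"
  proof
    fix t assume t: "t \<in> {a..A}"
    then have tb: "t \<in> {a..b}" using A by auto
    have "((\<lambda>s. c * Ib s) has_vector_derivative vector_derivative (\<lambda>s. c * Ib s) (at t within {a..b})) (at t within {a..A})"
      by (rule has_vector_derivative_within_subset[OF Ibd[OF tb]]) (use A in auto)
    then have "((\<lambda>s. c * IA s) has_vector_derivative vector_derivative (\<lambda>s. c * Ib s) (at t within {a..b})) (at t within {a..A})"
      by (rule has_vector_derivative_transform[OF t, rotated]) (simp add: Left)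
    then have "vector_derivative (\<lambda>s. c * IA s) (at t within {a..A}) = vector_derivative (\<lambda>s. c * Ib s) (at t within {a..b})"
      using vector_derivative_within_closed_interval[OF A(1) t] by blast
    then show "kat_der_right a \<alpha> \<rho> A \<Lambda> t - kat_der_right a \<alpha> \<rho> b \<Lambda> t = 0"
      by (simp add: kat_der_right_def kir_A kir_b)
  qed
  have C2: "\<forall>t\<in>{A..b}. P2 t - kat_der_right a \<alpha> \<rho> b \<Lambda> t = 0"
    using Right by (simp add: kat_der_right_def kir_b)
  have C3: "kat_int_right \<alpha> \<rho> A \<Lambda> a - kat_int_right \<alpha> \<rho> b \<Lambda> a = 0"
    using Left[of a] A by (simp add: kir_A kir_b)
  show ?thesis using C1 C2 C3 unfolding \<Lambda>_def P2_def v_def by blast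
qed


end
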